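(* For every generalized Stirling permutation $u$ of degree $n$ and every planar tree $t$ of degree $n$: $\pi(u)\le_{PT}t$ if and only if $u\le_{Pw}\iota(t)$. That is, $\pi$ and $\iota$ form a Galois connection between the planar weak order on generalized Stirling permutations and the planar Tamari order on planar trees.
   Context: A planar tree has linearly ordered children at each node, each node being a leaf or having $\ge2$ children (internal node); degree = number of leaves minus one. A generalized Stirling permutation (GSP) is a planar tree together with a bijection $\kappa$ from its internal nodes to $\{1,\dots,N\}$ ($N$ = number of internal nodes) increasing from each internal node to its internal children; $\pi(u)$ is its underlying planar tree. Its word $\mathbf w(u)$: a leaf has empty word; a node $x$ with children $c_1,\dots,c_k$ has word $\mathbf w(c_1)\kappa(x)\mathbf w(c_2)\cdots\kappa(x)\mathbf w(c_k)$. For each planar tree $t$ there is exactly one GSP with underlying tree $t$ whose word is $213$-avoiding (no $i<j<k$ with $w_k>w_i>w_j$); it is denoted $\iota(t)$. Planar weak order: for packed words, $w^{-1}(a)=\{p:w_p=a\}$, $\mathrm{iInv}(w)=\{(a,b):a<b,\ \min w^{-1}(a)>\max w^{-1}(b)\}$, $T_a(w)$ = $w$ with letters $a,a+1$ swapped; the order is the reflexive–transitive closure of: $u$ is covered by $w$ iff $u=T_a(w)$ and $|\mathrm{iInv}(w)|=|\mathrm{iInv}(u)|+1$. On GSPs, $u\le_{Pw}v$ iff $\mathbf w(u)\le\mathbf w(v)$. Planar Tamari order: if an internal node $x$ has children $c_1,\dots,c_{a-1},y$ ($a\ge2$) with $y$ internal having children $d_1,\dots,d_{b+1}$ ($b\ge1$),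 the left rotation at $x$ replaces the subtree at $x$ by a node with children $z,d_2,\dots,d_{b+1}$, where $z$ is a new node with children $c_1,\dots,c_{a-1},d_1$. $\le_{PT}$ is the reflexive–transitive closure of "$t$ is a left rotation of $s$". *)

theory Defs
  imports Main
begin

datatype ptree = Leaf | Node "ptree list"

fun wf_ptree :: "ptree \<Rightarrow> bool" where
  "wf_ptree Leaf = True"
| "wf_ptree (Node cs) = (2 \<le> length cs \<and> (\<forall>c\<in>set cs. wf_ptree c))"

fun leaves :: "ptree \<Rightarrow> nat" where
  "leaves Leaf = 1"
| "leaves (Node cs) = sum_list (map leaves cs)"

definition pdeg :: "ptree \<Rightarrow> nat" where
  "pdeg t = leaves t - 1"

section \<open>Generalized Stirling permutations (internal nodes labelled by kappa)\<close>

datatype ltree = LLeaf | LNode nat "ltree list"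

fun strip :: "ltree \<Rightarrow> ptree" where
  "strip LLeaf = Leaf"
| "strip (LNode k cs) = Node (map strip cs)"

fun labels :: "ltree \<Rightarrow> nat list" where
  "labels LLeaf = []"
| "labels (LNode k cs) = k # concat (map labels cs)"

fun lbl_incr :: "ltree \<Rightarrow> bool" where
  "lbl_incr LLeaf = True"
| "lbl_incr (LNode k cs) =
     (\<forall>c\<in>set cs. lbl_incr c \<and> (\<forall>k' ds. c = LNode k' ds \<longrightarrow> k < k'))"

definition gsp :: "ltree \<Rightarrow> bool" where
  "gsp u \<longleftrightarrow> wf_ptree (strip u) \<and> distinct (labels u)
      \<and> set (labels u) = {1..length (labels u)} \<and> lbl_incr u"

abbreviation \<pi> :: "ltree \<Rightarrow> ptree" where
  "\<pi> u \<equiv> strip u"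

fun word :: "ltree \<Rightarrow> nat list" where
  "word LLeaf = []"
| "word (LNode k []) = []"
| "word (LNode k (c # cs)) = word c @ concat (map (\<lambda>d. k # word d) cs)"

definition avoids213 :: "nat list \<Rightarrow> bool" where
  "avoids213 w \<longleftrightarrow> \<not> (\<exists>i j k. i < j \<and> j < k \<and> k < length w \<and> w!j < w!i \<and> w!i < w!k)"

definition \<iota> :: "ptree \<Rightarrow> ltree" where
  "\<iota> t = (THE u. gsp u \<and> strip u = t \<and> avoids213 (word u))"

definition packed :: "nat list \<Rightarrow> bool" where
  "packed w \<longleftrightarrow> set w = {1..Max (insert 0 (set w))}"

definition positions :: "nat list \<Rightarrow> nat \<Rightarrow> nat set" where
  "positions w a = {p. p < length w \<and> w ! p = a}"

definition iInv :: "nat list \<Rightarrow> (nat \<times> nat) set" where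
  "iInv w = {(a, b). a < b \<and> a \<in> set w \<and> b \<in> set w
              \<and> Min (positions w a) > Max (positions w b)}"

definition swapT :: "nat \<Rightarrow> nat list \<Rightarrow> nat list" where
  "swapT a w = map (\<lambda>x. if x = a then a + 1 else if x = a + 1 then a else x) w"

definition pw_cover :: "nat list \<Rightarrow> nat list \<Rightarrow> bool" where
  "pw_cover u w \<longleftrightarrow> packed u \<and> packed w \<and>
     (\<exists>a. u = swapT a w \<and> card (iInv w) = card (iInv u) + 1)"

definition pw_le :: "nat list \<Rightarrow> nat list \<Rightarrow> bool" where
  "pw_le = pw_cover\<^sup>*\<^sup>*"

definition gsp_le :: "ltree \<Rightarrow> ltree \<Rightarrow> bool" where
  "gsp_le u v \<longleftrightarrow> pw_le (word u) (word v)"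

inductive lrot :: "ptree \<Rightarrow> ptree \<Rightarrow> bool" where
  root: "cs \<noteq> [] \<Longrightarrow> ds \<noteq> [] \<Longrightarrow>
         lrot (Node (cs @ [Node (d1 # ds)])) (Node (Node (cs @ [d1]) # ds))"
| sub: "lrot s t \<Longrightarrow> lrot (Node (xs @ s # ys)) (Node (xs @ t # ys))"

definition pt_le :: "ptree \<Rightarrow> ptree \<Rightarrow> bool" where
  "pt_le = lrot\<^sup>*\<^sup>*"

end

theory Submission
  imports Defs
begin


fun splt :: "nat \<Rightarrow> nat list \<Rightarrow> nat list list" where
  "splt m [] = [[]]"
| "splt m (x # xs) = (if x = m then [] # splt m xs else (x # hd (splt m xs)) # tl (splt m xs))"

lemma splt_ne[simp]: "splt m xs \<noteq> []"
  by (induction xs) auto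

lemma splt_notin: "m \<notin> set xs \<Longrightarrow> splt m xs = [xs]"
  by (induction xs) auto

lemma splt_append: "splt m (xs @ ys) = butlast (splt m xs) @ (last (splt m xs) @ hd (splt m ys)) # tl (splt m ys)"
proof (induction xs)
  case Nil then show ?case by simp
next
  case (Cons x xs)
  show ?case
  proof (cases "x = m")
    case True then show ?thesis using Cons by simp
  next
    case False
    then show ?thesis using Cons
      by (cases "splt m xs") (auto simp: butlast_append split: if_splits)
  qed
qed

lemma splt_append_m: "splt m (xs @ m # ys) = splt m xs @ splt m ys"
proof (induction xs)
  case Nil then show ?case by simp
next
  case (Cons x xs) then show ?case by (cases "splt m xs") auto
qed

lemma splt_cases: "Q \<in> set (splt m (x # xs)) \<Longrightarrow>
   (x = m \<and> (Q = [] \<or> Q \<in> set (splt m xs))) \<or> (x \<noteq> m \<and> (Q = x # hd (splt m xs) \<or> Q \<in> set (splt m xs)))"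
proof -
  assume Q: "Q \<in> set (splt m (x # xs))"
  have "set (tl (splt m xs)) \<subseteq> set (splt m xs)" by (metis list.set_sel(2) splt_ne subsetI)
  then show ?thesis using Q by (auto split: if_splits)
qed

lemma splt_set: "Q \<in> set (splt m xs) \<Longrightarrow> set Q \<subseteq> set xs - {m}"
proof (induction xs arbitrary: Q)
  case Nil then show ?case by simp
next
  case (Cons x xs)
  have h: "hd (splt m xs) \<in> set (splt m xs)" by simp
  have i1: "set (hd (splt m xs)) \<subseteq> set xs - {m}" using Cons.IH[OF h] .
  from splt_cases[OF Cons(2)] show ?case
  proof (elim disjE conjE)
    assume "x \<noteq> m" "Q = x # hd (splt m xs)" then show ?thesis using i1 by auto
  qed (use Cons.IH in auto)
qed

lemma splt_len: "Q \<in> set (splt m xs) \<Longrightarrow> length Q \<le> length xs"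
proof (induction xs arbitrary: Q)
  case Nil then show ?case by simp
next
  case (Cons x xs)
  have h: "hd (splt m xs) \<in> set (splt m xs)" by simp
  have i1: "length (hd (splt m xs)) \<le> length xs" using Cons.IH[OF h] .
  from splt_cases[OF Cons(2)] show ?case
  proof (elim disjE conjE)
    assume "x \<noteq> m" "Q = x # hd (splt m xs)" then show ?thesis using i1 by auto
  qed (use Cons.IH in \<open>auto simp: le_SucI\<close>)
qed

lemma splt_len_lt: "m \<in> set xs \<Longrightarrow> Q \<in> set (splt m xs) \<Longrightarrow> length Q < length xs"
proof (induction xs arbitrary: Q)
  case Nil then show ?case by simp
next
  case (Cons x xs)
  show ?case
  proof (cases "x = m")
    case True
    then show ?thesis using Cons(3) splt_len[of Q m xs] by (auto split: if_splits)
  next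
    case False
    then have mx: "m \<in> set xs" using Cons(2) by simp
    have h: "hd (splt m xs) \<in> set (splt m xs)" by simp
    have t: "\<And>Q. Q \<in> set (tl (splt m xs)) \<Longrightarrow> Q \<in> set (splt m xs)"
      by (metis list.sel(2) list.set_sel(2) splt_ne)
    show ?thesis using Cons(3) False Cons.IH[OF mx h] Cons.IH[OF mx t] by (auto simp: less_Suc_eq)
  qed
qed

lemma splt_length2: "m \<in> set xs \<Longrightarrow> 2 \<le> length (splt m xs)"
proof -
  assume "m \<in> set xs"
  then obtain p s where "xs = p @ m # s" by (meson split_list)
  then show ?thesis
    by (cases "splt m p"; cases "splt m s") (auto simp: splt_append_m)
qed

lemma splt_map:
  assumes "\<forall>x\<in>set xs. f x = f m \<longleftrightarrow> x = m"
  shows "splt (f m) (map f xs) = map (map f) (splt m xs)"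
  using assms
proof (induction xs)
  case Nil then show ?case by simp
next
  case (Cons x xs)
  then show ?case
    by (cases "splt m xs") (auto simp: hd_map map_tl)
qed

fun join :: "nat \<Rightarrow> nat list list \<Rightarrow> nat list" where
  "join m [] = []"
| "join m (P # Ps) = P @ concat (map (\<lambda>Q. m # Q) Ps)"

lemma join_splt: "join m (splt m xs) = xs"
proof (induction xs)
  case Nil then show ?case by simp
next
  case (Cons x xs)
  then show ?case
    by (cases "splt m xs") auto
qed

lemma splt_join: "Ps \<noteq> [] \<Longrightarrow> \<forall>Q\<in>set Ps. m \<notin> set Q \<Longrightarrow> splt m (join m Ps) = Ps"
proof (induction Ps rule: rev_induct)
  case Nil then show ?case by simp
next
  case (snoc P Ps)
  show ?case
  proof (cases "Ps = []")
    case True then show ?thesis using snoc by (simp add: splt_notin)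
  next
    case False
    then obtain Q Qs where "Ps = Q # Qs" by (cases Ps) auto
    then have "join m (Ps @ [P]) = join m Ps @ m # P" by simp
    then show ?thesis using snoc False
      by (simp add: splt_append_m splt_notin)
  qed
qed

lemma word_join: "word (LNode k cs) = join k (map word cs)"
  by (cases cs) (auto simp: comp_def)

function ldec :: "nat list \<Rightarrow> ltree" where
  "ldec x = (if x = [] then LLeaf else LNode (Min (set x)) (map ldec (splt (Min (set x)) x)))"
  by auto
termination
  by (relation "measure length") (auto intro!: splt_len_lt)

declare ldec.simps[simp del]

lemma ldec_Nil[simp]: "ldec [] = LLeaf"
  by (simp add: ldec.simps)

lemma ldec_Cons: "x \<noteq> [] \<Longrightarrow> ldec x = LNode (Min (set x)) (map ldec (splt (Min (set x)) x))"
  by (simp add: ldec.simps)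

lemma word_ldec: "word (ldec x) = x"
proof (induction x rule: ldec.induct)
  case (1 x)
  show ?case
  proof (cases "x = []")
    case True then show ?thesis by simp
  next
    case False
    then have "word (ldec x) = join (Min (set x)) (map word (map ldec (splt (Min (set x)) x)))"
      by (simp add: ldec_Cons word_join)
    also have "map word (map ldec (splt (Min (set x)) x)) = splt (Min (set x)) x"
      using 1 False by (simp add: map_idI)
    finally show ?thesis by (simp add: join_splt)
  qed
qed

lemma good_ldec: "wf_ptree (strip (ldec x)) \<and> lbl_incr (ldec x)"
proof (induction x rule: ldec.induct)
  case (1 x)
  show ?case
  proof (cases "x = []")
    case True then show ?thesis by simp
  next
    case False
    let ?m = "Min (set x)"
    have mx: "?m \<in> set x" using False by simp
    have l2: "2 \<le> length (splt ?m x)" using splt_length2[OF mx] .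
    have ch: "\<forall>Q\<in>set (splt ?m x). \<forall>k' ds. ldec Q = LNode k' ds \<longrightarrow> ?m < k'"
    proof (intro ballI allI impI)
      fix Q k' ds assume Q: "Q \<in> set (splt ?m x)" and e: "ldec Q = LNode k' ds"
      then have "Q \<noteq> []" by auto
      then have "k' = Min (set Q)" using e by (simp add: ldec_Cons)
      moreover have "set Q \<subseteq> set x - {?m}" using splt_set[OF Q] .
      ultimately show "?m < k'" using \<open>Q \<noteq> []\<close>
        by (metis Diff_iff List.finite_set Min_in Min_le insertI1 le_neq_implies_less
            set_empty subsetD)
    qed
    show ?thesis using 1 False l2 ch by (auto simp: ldec_Cons)
  qed
qed

fun relabel :: "(nat \<Rightarrow> nat) \<Rightarrow> ltree \<Rightarrow> ltree" where
  "relabel f LLeaf = LLeaf"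
| "relabel f (LNode k cs) = LNode (f k) (map (relabel f) cs)"

lemma strip_relabel[simp]: "strip (relabel f u) = strip u"
  by (induction u) (auto simp: map_idI)

lemma word_relabel: "word (relabel f u) = map f (word u)"
proof (induction u)
  case LLeaf then show ?case by simp
next
  case (LNode k cs)
  have e: "map (word \<circ> relabel f) cs = map (map f) (map word cs)" using LNode by (simp add: map_eq_conv)
  have "word (relabel f (LNode k cs)) = join (f k) (map (word \<circ> relabel f) cs)"
    by (simp add: word_join)
  also have "\<dots> = join (f k) (map (map f) (map word cs))" by (simp only: e)
  also have "\<dots> = map f (join k (map word cs))"
    by (cases cs) (auto simp: map_concat comp_def)
  finally show ?case by (simp add: word_join)
qed

lemma labels_relabel: "labels (relabel f u) = map f (labels u)"
proof (induction u)
  case LLeaf then show ?case by simp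
next
  case (LNode k cs)
  have e: "map (labels \<circ> relabel f) cs = map (map f) (map labels cs)" using LNode by (simp add: map_eq_conv)
  have "labels (relabel f (LNode k cs)) = f k # concat (map (labels \<circ> relabel f) cs)" by simp
  also have "\<dots> = f k # concat (map (map f) (map labels cs))" by (simp only: e)
  finally show ?case by (simp add: map_concat)
qed

lemma ldec_mono:
  assumes "\<forall>x\<in>set w. \<forall>y\<in>set w. x < y \<longrightarrow> f x < f y"
  shows "ldec (map f w) = relabel f (ldec w)"
  using assms
proof (induction w rule: ldec.induct)
  case (1 w)
  show ?case
  proof (cases "w = []")
    case True then show ?thesis by simp
  next
    case False
    let ?m = "Min (set w)"
    have mw: "?m \<in> set w" using False by simp
    have mle: "\<forall>x\<in>set w. ?m \<le> x" by simp
    have inj: "\<forall>x\<in>set w. f x = f ?m \<longleftrightarrow> x = ?m"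
      using 1(2) mw by (metis linorder_neq_iff less_irrefl)
    have fm: "Min (set (map f w)) = f ?m"
    proof (rule Min_eqI)
      show "finite (set (map f w))" by simp
      show "f ?m \<in> set (map f w)" using mw by simp
      fix y assume "y \<in> set (map f w)"
      then obtain z where z: "z \<in> set w" "y = f z" by auto
      show "f ?m \<le> y"
      proof (cases "z = ?m")
        case True then show ?thesis using z by simp
      next
        case False then have "?m < z" using mle z(1) by (simp add: order_less_le)
        then show ?thesis using 1(2) mw z by (simp add: less_imp_le)
      qed
    qed
    have ne: "map f w \<noteq> []" using False by simp
    have "ldec (map f w) = LNode (Min (set (map f w))) (map ldec (splt (Min (set (map f w))) (map f w)))"
      by (rule ldec_Cons[OF ne])
    then have "ldec (map f w) = LNode (f ?m) (map ldec (map (map f) (splt ?m w)))"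
      unfolding fm splt_map[OF inj] .
    also have "map ldec (map (map f) (splt ?m w)) = map (relabel f) (map ldec (splt ?m w))"
    proof -
      have "\<And>Q. Q \<in> set (splt ?m w) \<Longrightarrow> ldec (map f Q) = relabel f (ldec Q)"
      proof -
        fix Q assume Q: "Q \<in> set (splt ?m w)"
        have "set Q \<subseteq> set w" using splt_set[OF Q] by auto
        then show "ldec (map f Q) = relabel f (ldec Q)"
          using 1(1)[OF False Q] 1(2) by blast
      qed
      then show ?thesis by (simp add: map_eq_conv)
    qed
    finally show ?thesis using False by (simp add: ldec_Cons[of w])
  qed
qed



definition good :: "ltree \<Rightarrow> bool" where
  "good u \<longleftrightarrow> wf_ptree (strip u) \<and> lbl_incr u"

lemma lbl_lower: "lbl_incr u \<Longrightarrow> u = LNode k cs \<Longrightarrow> l \<in> set (labels u) \<Longrightarrow> k \<le> l"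
proof (induction u arbitrary: k cs l)
  case LLeaf then show ?case by simp
next
  case (LNode k0 cs0)
  then have k: "k0 = k" "cs0 = cs" by auto
  show ?case
  proof (cases "l = k")
    case True then show ?thesis by simp
  next
    case False
    then obtain c where c: "c \<in> set cs" "l \<in> set (labels c)" using LNode(4) k by auto
    obtain k' ds where cd: "c = LNode k' ds" using c(2) by (cases c) auto
    have "k < k'" using LNode(2) c(1) cd k by auto
    moreover have "k' \<le> l" using LNode(1)[of c k' ds l] LNode(2) c cd k by auto
    ultimately show ?thesis by simp
  qed
qed

lemma lbl_child: "lbl_incr (LNode k cs) \<Longrightarrow> c \<in> set cs \<Longrightarrow> l \<in> set (labels c) \<Longrightarrow> k < l"
proof -
  assume a: "lbl_incr (LNode k cs)" "c \<in> set cs" "l \<in> set (labels c)"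
  obtain k' ds where cd: "c = LNode k' ds" using a(3) by (cases c) auto
  have "k < k'" using a cd by auto
  moreover have "k' \<le> l" using lbl_lower[of c k' ds l] a cd by auto
  ultimately show ?thesis by simp
qed

lemma set_join_sub: "set (join m Ps) \<subseteq> insert m (\<Union>Q\<in>set Ps. set Q)"
  by (cases Ps) auto

lemma word_sub_labels: "set (word u) \<subseteq> set (labels u)"
proof (induction u)
  case LLeaf then show ?case by simp
next
  case (LNode k cs)
  have "set (word (LNode k cs)) \<subseteq> insert k (\<Union>c\<in>set cs. set (word c))"
    using set_join_sub[of k "map word cs"] by (simp add: word_join)
  also have "\<dots> \<subseteq> insert k (\<Union>c\<in>set cs. set (labels c))" using LNode by blast
  finally show ?case by simp
qed

lemma set_join: "Ps \<noteq> [] \<Longrightarrow> set (join m Ps) = (\<Union>Q\<in>set Ps. set Q) \<union> (if length Ps \<ge> 2 then {m} else {})"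
  by (cases Ps; cases "tl Ps") auto

lemma ldec_word: "good u \<Longrightarrow> ldec (word u) = u"
proof (induction u)
  case LLeaf then show ?case by simp
next
  case (LNode k cs)
  have wf: "2 \<le> length cs" "\<forall>c\<in>set cs. good c" using LNode(2)
    by (auto simp: good_def)
  have gt: "\<forall>c\<in>set cs. \<forall>l\<in>set (word c). k < l"
    using lbl_child[of k cs] LNode(2) word_sub_labels unfolding good_def by blast
  have ne: "map word cs \<noteq> []" using wf by auto
  have sw: "set (word (LNode k cs)) = (\<Union>c\<in>set cs. set (word c)) \<union> {k}"
    using set_join[OF ne, of k] wf by (simp add: word_join)
  have mn: "Min (set (word (LNode k cs))) = k"
    by (rule Min_eqI) (use sw gt in \<open>auto simp: less_imp_le\<close>)
  have nk: "word (LNode k cs) \<noteq> []" using sw by auto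
  have sp: "splt k (word (LNode k cs)) = map word cs"
    unfolding word_join using gt by (intro splt_join[OF ne]) auto
  have "ldec (word (LNode k cs)) = LNode k (map ldec (map word cs))"
    using ldec_Cons[OF nk] mn sp by simp
  also have "map ldec (map word cs) = cs"
    using LNode(1) wf(2) by (simp add: map_idI)
  finally show ?case .
qed

definition dec :: "nat list \<Rightarrow> ptree" where
  "dec x = strip (ldec x)"

lemma dec_Cons: "x \<noteq> [] \<Longrightarrow> dec x = Node (map dec (splt (Min (set x)) x))"
  by (simp add: dec_def ldec_Cons)

definition sw :: "nat \<Rightarrow> nat \<Rightarrow> nat" where
  "sw a v = (if v = a then Suc a else if v = Suc a then a else v)"

lemma swapT_sw: "swapT a w = map (sw a) w"
  by (simp add: swapT_def sw_def)

lemma sw_inj: "sw a v = sw a w \<longleftrightarrow> v = w"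
  by (auto simp: sw_def)

lemma sw_invol[simp]: "sw a (sw a v) = v"
  by (auto simp: sw_def)

lemma sw_mono: "\<not> (a \<in> S \<and> Suc a \<in> S) \<Longrightarrow> \<forall>x\<in>S. \<forall>y\<in>S. x < y \<longrightarrow> sw a x < sw a y"
  by (auto simp: sw_def)

lemma map_sw_id: "a \<notin> set Q \<Longrightarrow> Suc a \<notin> set Q \<Longrightarrow> map (sw a) Q = Q"
  by (induction Q) (auto simp: sw_def)

lemma mono_piece: "\<not> (a \<in> set Q \<and> Suc a \<in> set Q) \<Longrightarrow> ldec (map (sw a) Q) = relabel (sw a) (ldec Q)"
  by (rule ldec_mono) (rule sw_mono)

lemma mono_piece_dec: "\<not> (a \<in> set Q \<and> Suc a \<in> set Q) \<Longrightarrow> dec (map (sw a) Q) = dec Q"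
  by (simp add: dec_def mono_piece)

lemma Min_list: "v \<in> set x \<Longrightarrow> (\<And>w. w \<in> set x \<Longrightarrow> v \<le> w) \<Longrightarrow> Min (set x) = v"
  by (rule Min_eqI) auto

lemma splt_mid:
  assumes "e \<noteq> m"
  shows "splt m (P @ e # S) = butlast (splt m P) @ (last (splt m P) @ e # hd (splt m S)) # tl (splt m S)"
  using assms by (simp add: splt_append)

lemma in_butlast: "Q \<in> set (butlast xs) \<Longrightarrow> Q \<in> set xs"
  by (rule in_set_butlastD)

lemma in_tl: "Q \<in> set (tl xs) \<Longrightarrow> Q \<in> set xs"
  by (cases xs) auto

lemma sep_swap:
  assumes "e < a" "a \<notin> set S" "Suc a \<notin> set P"
  shows "ldec (map (sw a) (P @ e # S)) = relabel (sw a) (ldec (P @ e # S))"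
  using assms
proof (induction "length (P @ e # S)" arbitrary: P e S rule: less_induct)
  case less
  define x where "x = P @ e # S"
  define m where "m = Min (set x)"
  have xne: "x \<noteq> []" by (simp add: x_def)
  have mx: "m \<in> set x" by (simp add: m_def xne)
  have mle: "\<And>v. v \<in> set x \<Longrightarrow> m \<le> v" by (simp add: m_def)
  have me: "m \<le> e" using mle by (simp add: x_def)
  have swm: "sw a m = m" using me less(2) by (simp add: sw_def)
  have inj: "\<forall>v\<in>set x. sw a v = sw a m \<longleftrightarrow> v = m" by (simp add: sw_inj)
  have mn: "Min (set (map (sw a) x)) = m"
  proof (rule Min_list)
    show "m \<in> set (map (sw a) x)" using mx swm by force
    fix w assume "w \<in> set (map (sw a) x)"
    then obtain v where v: "v \<in> set x" "w = sw a v" by auto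
    show "m \<le> w" using mle[OF v(1)] me less(2) v(2) by (auto simp: sw_def)
  qed
  have sp: "splt m (map (sw a) x) = map (map (sw a)) (splt m x)"
    using splt_map[OF inj] swm by simp
  have pieces: "\<And>Q. Q \<in> set (splt m x) \<Longrightarrow> ldec (map (sw a) Q) = relabel (sw a) (ldec Q)"
  proof -
    fix Q assume Q: "Q \<in> set (splt m x)"
    show "ldec (map (sw a) Q) = relabel (sw a) (ldec Q)"
    proof (cases "e = m")
      case True
      then have "Q \<in> set (splt m P) \<or> Q \<in> set (splt m S)" using Q
        by (simp add: x_def splt_append_m)
      then show ?thesis
      proof
        assume "Q \<in> set (splt m P)"
        then have "Suc a \<notin> set Q" using splt_set less(4) by blast
        then show ?thesis by (simp add: mono_piece)
      next
        assume "Q \<in> set (splt m S)"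
        then have "a \<notin> set Q" using splt_set less(3) by blast
        then show ?thesis by (simp add: mono_piece)
      qed
    next
      case False
      have eq: "splt m x = butlast (splt m P) @ (last (splt m P) @ e # hd (splt m S)) # tl (splt m S)"
        unfolding x_def by (rule splt_mid[OF False])
      have "Q \<in> set (butlast (splt m P)) \<or> Q = last (splt m P) @ e # hd (splt m S) \<or> Q \<in> set (tl (splt m S))"
        using Q unfolding eq by (simp only: set_append list.set Un_iff insert_iff)
      then show ?thesis
      proof (elim disjE)
        assume B: "Q \<in> set (butlast (splt m P))"
        have "set Q \<subseteq> set P - {m}" by (rule splt_set[OF in_butlast[OF B]])
        then have "Suc a \<notin> set Q" using less(4) by blast
        then show ?thesis by (simp add: mono_piece)
      next
        assume B: "Q \<in> set (tl (splt m S))"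
        have "set Q \<subseteq> set S - {m}" by (rule splt_set[OF in_tl[OF B]])
        then have "a \<notin> set Q" using less(3) by blast
        then show ?thesis by (simp add: mono_piece)
      next
        assume Qe: "Q = last (splt m P) @ e # hd (splt m S)"
        have l: "length Q < length (P @ e # S)" using splt_len_lt[OF mx Q] by (simp add: x_def)
        have "Suc a \<notin> set (last (splt m P))" using splt_set[of "last (splt m P)" m P] less(4) by auto
        moreover have "a \<notin> set (hd (splt m S))" using splt_set[of "hd (splt m S)" m S] less(3) by auto
        ultimately show ?thesis using less(1)[OF l[unfolded Qe]] less(2) Qe by simp
      qed
    qed
  qed
  have "ldec (map (sw a) x) = LNode m (map ldec (map (map (sw a)) (splt m x)))"
    using ldec_Cons[of "map (sw a) x"] xne mn sp by simp
  also have "\<dots> = LNode (sw a m) (map (relabel (sw a)) (map ldec (splt m x)))"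
    using pieces swm by simp
  also have "\<dots> = relabel (sw a) (ldec x)"
    unfolding ldec_Cons[OF xne] m_def[symmetric] by (simp add: swm)
  finally show ?case unfolding x_def .
qed



lemma dec_map_pieces:
  assumes "\<And>Q. Q \<in> set Qs \<Longrightarrow> \<not> (a \<in> set Q \<and> Suc a \<in> set Q)"
  shows "map (dec \<circ> map (sw a)) Qs = map dec Qs"
  using assms mono_piece_dec by (simp add: map_eq_conv)

lemma rot_swap:
  assumes "a \<notin> set S" "Suc a \<notin> set P"
  shows "dec (map (sw a) (P @ S)) = dec (P @ S) \<or> lrot (dec (P @ S)) (dec (map (sw a) (P @ S)))"
  using assms
proof (induction "length (P @ S)" arbitrary: P S rule: less_induct)
  case less
  define x where "x = P @ S"
  show ?case
  proof (cases "a \<in> set x \<and> Suc a \<in> set x")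
    case False
    have "dec (map (sw a) x) = dec x" by (rule mono_piece_dec[OF False])
    then show ?thesis using x_def by simp
  next
    case True
    have aP: "a \<in> set P" using True less(2) x_def by auto
    have aS: "Suc a \<in> set S" using True less(3) x_def by auto
    have xne: "x \<noteq> []" using True by auto
    define m where "m = Min (set x)"
    have mx: "m \<in> set x" by (simp add: m_def xne)
    have mle: "\<And>v. v \<in> set x \<Longrightarrow> m \<le> v" by (simp add: m_def)
    have ma: "m \<le> a" using mle True by auto
    show ?thesis
    proof (cases "m = a")
      case False
      then have mlt: "m < a" using ma by simp
      have swm: "sw a m = m" using mlt by (simp add: sw_def)
      have inj: "\<forall>v\<in>set x. sw a v = sw a m \<longleftrightarrow> v = m" by (simp add: sw_inj)
      have mn: "Min (set (map (sw a) x)) = m"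
      proof (rule Min_list)
        show "m \<in> set (map (sw a) x)" using mx swm by force
        fix w assume "w \<in> set (map (sw a) x)"
        then obtain v where v: "v \<in> set x" "w = sw a v" by auto
        show "m \<le> w" using mle[OF v(1)] mlt v(2) by (auto simp: sw_def)
      qed
      have sp: "splt m (map (sw a) x) = map (map (sw a)) (splt m x)"
        using splt_map[OF inj] swm by simp
      define B where "B = butlast (splt m P)"
      define M where "M = last (splt m P) @ hd (splt m S)"
      define T where "T = tl (splt m S)"
      have eq: "splt m x = B @ M # T" by (simp add: x_def B_def M_def T_def splt_append)
      have Bp: "\<And>Q. Q \<in> set B \<Longrightarrow> \<not> (a \<in> set Q \<and> Suc a \<in> set Q)"
      proof -
        fix Q assume B: "Q \<in> set B"
        have "set Q \<subseteq> set P - {m}" by (rule splt_set[OF in_butlast[OF B[unfolded B_def]]])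
        then show "\<not> (a \<in> set Q \<and> Suc a \<in> set Q)" using less(3) by blast
      qed
      have Tp: "\<And>Q. Q \<in> set T \<Longrightarrow> \<not> (a \<in> set Q \<and> Suc a \<in> set Q)"
      proof -
        fix Q assume B: "Q \<in> set T"
        have "set Q \<subseteq> set S - {m}" by (rule splt_set[OF in_tl[OF B[unfolded T_def]]])
        then show "\<not> (a \<in> set Q \<and> Suc a \<in> set Q)" using less(2) by blast
      qed
      have Mx: "M \<in> set (splt m x)" using eq by simp
      have l: "length (last (splt m P) @ hd (splt m S)) < length (P @ S)"
        using splt_len_lt[OF mx Mx] by (simp add: x_def M_def)
      have s1: "Suc a \<notin> set (last (splt m P))" using splt_set[of "last (splt m P)" m P] less(3) by auto
      have s2: "a \<notin> set (hd (splt m S))" using splt_set[of "hd (splt m S)" m S] less(2) by auto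
      have IH: "dec (map (sw a) M) = dec M \<or> lrot (dec M) (dec (map (sw a) M))"
        using less(1)[OF l s2 s1] by (simp add: M_def)
      have d1: "dec x = Node (map dec B @ dec M # map dec T)"
        using dec_Cons[OF xne] eq by (simp add: m_def)
      have mxne: "map (sw a) x \<noteq> []" using xne by simp
      have d2: "dec (map (sw a) x) = Node (map dec B @ dec (map (sw a) M) # map dec T)"
        using dec_Cons[OF mxne] mn sp eq dec_map_pieces[OF Bp] dec_map_pieces[OF Tp] by simp
      from IH show ?thesis
      proof
        assume "dec (map (sw a) M) = dec M"
        then show ?thesis using d1 d2 x_def by simp
      next
        assume "lrot (dec M) (dec (map (sw a) M))"
        then have "lrot (dec x) (dec (map (sw a) x))" unfolding d1 d2 by (rule lrot.sub)
        then show ?thesis using x_def by simp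
      qed
    next
      case True
      note ma = True
      define PP where "PP = splt a P"
      define B where "B = butlast PP"
      define L where "L = last PP"
      define SS where "SS = splt (Suc a) S"
      have PP2: "2 \<le> length PP" using splt_length2[OF aP] by (simp add: PP_def)
      have SS2: "2 \<le> length SS" using splt_length2[OF aS] by (simp add: SS_def)
      have Bne: "B \<noteq> []" using PP2 by (cases PP rule: rev_cases) (auto simp: B_def)
      have tSSne: "tl SS \<noteq> []" using SS2 by (cases SS) auto
      have PPe: "PP = B @ [L]" using PP2 unfolding B_def L_def
        by (metis append_butlast_last_id list.size(3) not_numeral_le_zero)
      have SSe: "SS = hd SS # tl SS" using SS2 by (cases SS) auto
      have Lset: "set L \<subseteq> set P - {a}" using splt_set[of L a P] PPe by (simp add: PP_def)
      have Bset: "\<And>Q. Q \<in> set B \<Longrightarrow> set Q \<subseteq> set P - {a}" using splt_set PPe by (simp add: PP_def)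
      have SSset: "\<And>Q. Q \<in> set SS \<Longrightarrow> set Q \<subseteq> set S - {Suc a}" using splt_set by (simp add: SS_def)
      have xge: "\<And>v. v \<in> set x \<Longrightarrow> a \<le> v" using mle ma by simp
      have spx: "splt a x = B @ [L @ S]"
        using splt_notin[OF less(2)] PPe by (simp add: x_def splt_append PP_def[symmetric])
      have dx: "dec x = Node (map dec B @ [dec (L @ S)])"
        using dec_Cons[OF xne] spx ma by (simp add: m_def)
      have LSne: "L @ S \<noteq> []" using aS by auto
      have mLS: "Min (set (L @ S)) = Suc a"
      proof (rule Min_list)
        show "Suc a \<in> set (L @ S)" using aS by simp
        fix w assume w: "w \<in> set (L @ S)"
        then have "w \<in> set x" "w \<noteq> a" using Lset less(2) x_def by auto
        then show "Suc a \<le> w" using xge by fastforce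
      qed
      have sLS: "splt (Suc a) (L @ S) = (L @ hd SS) # tl SS"
      proof -
        have "Suc a \<notin> set L" using Lset less(3) by auto
        then have "splt (Suc a) L = [L]" by (rule splt_notin)
        then show ?thesis using SSe by (simp add: splt_append SS_def[symmetric])
      qed
      have dLS: "dec (L @ S) = Node (dec (L @ hd SS) # map dec (tl SS))"
        using dec_Cons[OF LSne] mLS sLS by simp
      define y where "y = map (sw a) x"
      have yeq: "y = map (sw a) P @ map (sw a) S" by (simp add: y_def x_def)
      have injS: "\<forall>v\<in>set S. sw a v = sw a (Suc a) \<longleftrightarrow> v = Suc a" by (simp add: sw_inj)
      have swSa: "sw a (Suc a) = a" by (simp add: sw_def)
      have swa: "sw a a = Suc a" by (simp add: sw_def)
      have SSid: "map (map (sw a)) SS = SS"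
      proof -
        have "\<And>Q. Q \<in> set SS \<Longrightarrow> map (sw a) Q = Q"
          using SSset less(2) map_sw_id by blast
        then show ?thesis by (simp add: map_idI)
      qed
      have PPid: "map (map (sw a)) PP = PP"
      proof -
        have "\<And>Q. Q \<in> set PP \<Longrightarrow> map (sw a) Q = Q"
          using splt_set[of _ a P] less(3) map_sw_id unfolding PP_def by blast
        then show ?thesis by (simp add: map_idI)
      qed
      have spS: "splt a (map (sw a) S) = SS"
        using splt_map[OF injS] swSa SSid by (simp add: SS_def)
      have anP: "a \<notin> set (map (sw a) P)" using less(3) by (auto simp: sw_def)
      have spy: "splt a y = (map (sw a) P @ hd SS) # tl SS"
        using splt_notin[OF anP] spS yeq by (simp add: splt_append)
      have yne: "y \<noteq> []" using xne y_def by simp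
      have my: "Min (set y) = a"
      proof (rule Min_list)
        show "a \<in> set y" using aS swSa yeq by force
        fix w assume "w \<in> set y"
        then obtain v where v: "v \<in> set x" "w = sw a v" by (auto simp: y_def)
        show "a \<le> w" using xge[OF v(1)] v(2) by (auto simp: sw_def)
      qed
      have dy: "dec y = Node (dec (map (sw a) P @ hd SS) # map dec (tl SS))"
        using dec_Cons[OF yne] my spy by simp
      have ZP: "map (sw a) P @ hd SS \<noteq> []" using aP by auto
      have hdSS: "set (hd SS) \<subseteq> set S - {Suc a}" using SSset SSe by (metis list.set_intros(1))
      have mZ: "Min (set (map (sw a) P @ hd SS)) = Suc a"
      proof (rule Min_list)
        show "Suc a \<in> set (map (sw a) P @ hd SS)" using aP swa by force
        fix w assume w: "w \<in> set (map (sw a) P @ hd SS)"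
        then have "w \<in> set (map (sw a) P) \<or> w \<in> set (hd SS)" by simp
        then show "Suc a \<le> w"
        proof
          assume "w \<in> set (map (sw a) P)"
          then obtain v where v: "v \<in> set P" "w = sw a v" by auto
          have "a \<le> v" using xge v(1) x_def by simp
          then show ?thesis using v(2) less(3) v(1) by (auto simp: sw_def)
        next
          assume "w \<in> set (hd SS)"
          then have "w \<in> set x" "w \<noteq> a" "w \<noteq> Suc a" using hdSS less(2) x_def by auto
          then show ?thesis using xge by fastforce
        qed
      qed
      have injP: "\<forall>v\<in>set P. sw a v = sw a a \<longleftrightarrow> v = a" by (simp add: sw_inj)
      have spP: "splt (Suc a) (map (sw a) P) = PP"
        using splt_map[OF injP] swa PPid by (simp add: PP_def)
      have nhd: "Suc a \<notin> set (hd SS)" using hdSS by auto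
      have sZ: "splt (Suc a) (map (sw a) P @ hd SS) = B @ [L @ hd SS]"
        using splt_notin[OF nhd] spP PPe by (simp add: splt_append)
      have dZ: "dec (map (sw a) P @ hd SS) = Node (map dec B @ [dec (L @ hd SS)])"
        using dec_Cons[OF ZP] mZ sZ by simp
      have "lrot (Node (map dec B @ [Node (dec (L @ hd SS) # map dec (tl SS))]))
                 (Node (Node (map dec B @ [dec (L @ hd SS)]) # map dec (tl SS)))"
        by (rule lrot.root) (use Bne tSSne in auto)
      then have "lrot (dec x) (dec y)" using dx dLS dy dZ by simp
      then show ?thesis by (simp add: x_def y_def)
    qed
  qed
qed



lemma positions_sw: "positions (map (sw a) x) v = positions x (sw a v)"
  unfolding positions_def by (auto simp: sw_invol)

lemma img_sw: "v \<in> sw a ` S \<longleftrightarrow> sw a v \<in> S"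
  by (auto, metis imageI sw_invol)

lemma set_sw: "v \<in> set (map (sw a) x) \<longleftrightarrow> sw a v \<in> set x"
  by (simp add: img_sw)

lemma sw_less: "(p,q) \<noteq> (a,Suc a) \<Longrightarrow> (p,q) \<noteq> (Suc a,a) \<Longrightarrow> p < q \<longleftrightarrow> sw a p < sw a q"
  by (auto simp: sw_def)

lemma iInv_sw: "(p,q) \<noteq> (a,Suc a) \<Longrightarrow> (p,q) \<noteq> (Suc a,a) \<Longrightarrow>
   (p,q) \<in> iInv (map (sw a) x) \<longleftrightarrow> (sw a p, sw a q) \<in> iInv x"
  unfolding iInv_def using sw_less[of p q a] by (simp add: positions_sw img_sw)

lemma iInv_sub: "iInv x \<subseteq> set x \<times> set x"
  unfolding iInv_def by auto

lemma finite_iInv: "finite (iInv x)"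
  using iInv_sub finite_subset by blast

definition F :: "nat \<Rightarrow> nat \<times> nat \<Rightarrow> nat \<times> nat" where
  "F a = (\<lambda>(p,q). (sw a p, sw a q))"

lemma iInv_F: "iInv (map (sw a) x) - {(a,Suc a)} = F a ` (iInv x - {(a,Suc a)})"
proof
  show "iInv (map (sw a) x) - {(a, Suc a)} \<subseteq> F a ` (iInv x - {(a, Suc a)})"
  proof
    fix z assume z: "z \<in> iInv (map (sw a) x) - {(a, Suc a)}"
    obtain p q where pq: "z = (p,q)" by (cases z)
    have pq2: "p < q" using z pq by (simp add: iInv_def)
    then have "(p,q) \<noteq> (Suc a, a)" by auto
    then have i: "(sw a p, sw a q) \<in> iInv x" using iInv_sw z pq by auto
    have "(sw a p, sw a q) \<noteq> (a, Suc a)" using pq2 by (auto simp: sw_def split: if_splits)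
    then show "z \<in> F a ` (iInv x - {(a, Suc a)})" using i pq
      by (auto simp: F_def image_iff intro!: bexI[of _ "(sw a p, sw a q)"])
  qed
next
  show "F a ` (iInv x - {(a, Suc a)}) \<subseteq> iInv (map (sw a) x) - {(a, Suc a)}"
  proof
    fix z assume "z \<in> F a ` (iInv x - {(a, Suc a)})"
    then obtain p q where pq: "(p,q) \<in> iInv x" "(p,q) \<noteq> (a,Suc a)" "z = (sw a p, sw a q)"
      by (auto simp: F_def)
    have pq2: "p < q" using pq by (simp add: iInv_def)
    have n1: "(sw a p, sw a q) \<noteq> (a, Suc a)" using pq(2) pq2 by (auto simp: sw_def split: if_splits)
    have n2: "(sw a p, sw a q) \<noteq> (Suc a, a)" using pq(2) by (auto simp: sw_def split: if_splits)
    show "z \<in> iInv (map (sw a) x) - {(a, Suc a)}"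
      using iInv_sw[OF n1 n2] pq n1 by simp
  qed
qed

lemma inj_F: "inj (F a)"
  unfolding F_def inj_def by (auto simp: sw_inj)

lemma pw_cover_dec:
  assumes "pw_cover x y"
  shows "\<exists>a P S. x = P @ S \<and> a \<notin> set S \<and> Suc a \<notin> set P \<and> y = map (sw a) x"
proof -
  obtain a where a: "x = swapT a y" "card (iInv y) = card (iInv x) + 1"
    using assms by (auto simp: pw_cover_def)
  have yx: "y = map (sw a) x" using a(1) by (simp add: swapT_sw comp_def)
  have "(a, Suc a) \<in> iInv y"
  proof (rule ccontr)
    assume n: "(a, Suc a) \<notin> iInv y"
    then have "iInv y = F a ` (iInv x - {(a,Suc a)})" using iInv_F[of a x] yx by auto
    then have "card (iInv y) \<le> card (iInv x - {(a,Suc a)})" by (simp add: card_image_le finite_iInv)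
    also have "\<dots> \<le> card (iInv x)" by (rule card_mono) (auto simp: finite_iInv)
    finally show False using a(2) by simp
  qed
  then have h: "a \<in> set y" "Suc a \<in> set y" "Min (positions y a) > Max (positions y (Suc a))"
    by (auto simp: iInv_def)
  have swa: "sw a a = Suc a" "sw a (Suc a) = a" by (auto simp: sw_def)
  have pa: "positions y a = positions x (Suc a)" "positions y (Suc a) = positions x a"
    using positions_sw[of a x] yx swa by auto
  have ax: "a \<in> set x" using h(2) yx set_sw[of "Suc a" a x] swa by simp
  have fin: "finite (positions x a)" by (simp add: positions_def)
  have ne: "positions x a \<noteq> {}" using ax by (auto simp: positions_def in_set_conv_nth)
  define i where "i = Max (positions x a)"
  have lt: "\<And>p. p \<in> positions x (Suc a) \<Longrightarrow> i < p"
    using h(3) pa fin by (simp add: i_def) (metis Min_le finite_nat_set_iff_bounded_le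
        less_le_trans positions_def mem_Collect_eq finite_Collect_conjI finite_Collect_less_nat)
  have ge: "\<And>p. p \<in> positions x a \<Longrightarrow> p \<le> i" using fin by (simp add: i_def)
  define P where "P = take (Suc i) x"
  define S where "S = drop (Suc i) x"
  have "a \<notin> set S"
  proof
    assume "a \<in> set S"
    then obtain j where j: "j < length S" "S ! j = a" by (auto simp: in_set_conv_nth)
    then have "Suc i + j \<in> positions x a" by (simp add: S_def positions_def)
    then show False using ge by fastforce
  qed
  moreover have "Suc a \<notin> set P"
  proof
    assume "Suc a \<in> set P"
    then obtain j where j: "j < length P" "P ! j = Suc a" by (auto simp: in_set_conv_nth)
    then have "j \<in> positions x (Suc a)" by (simp add: P_def positions_def)
    then show False using lt j(1) by (fastforce simp: P_def)
  qed
  moreover have "x = P @ S" by (simp add: P_def S_def)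
  ultimately show ?thesis using yx by blast
qed

definition cov :: "nat list \<Rightarrow> nat list \<Rightarrow> bool" where
  "cov x y \<longleftrightarrow> (\<exists>a P S. x = P @ S \<and> a \<in> set P \<and> a \<notin> set S \<and> Suc a \<in> set S \<and> Suc a \<notin> set P
      \<and> y = map (sw a) x)"

lemma cov_set: "cov x y \<Longrightarrow> set y = set x"
proof -
  assume "cov x y"
  then obtain a P S where c: "x = P @ S" "a \<in> set P" "Suc a \<in> set S" "y = map (sw a) x"
    by (auto simp: cov_def)
  have "set y = sw a ` set x" using c(4) by simp
  also have "\<dots> = set x"
  proof
    show "sw a ` set x \<subseteq> set x" using c by (auto simp: sw_def)
    show "set x \<subseteq> sw a ` set x"
    proof
      fix v assume "v \<in> set x"
      moreover have "sw a v \<in> set x" using c \<open>v \<in> set x\<close> by (auto simp: sw_def)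
      ultimately show "v \<in> sw a ` set x" by (metis image_eqI sw_invol)
    qed
  qed
  finally show ?thesis .
qed

lemma cov_pw:
  assumes "cov x y" "packed x"
  shows "pw_cover x y \<and> card (iInv y) = card (iInv x) + 1"
proof -
  obtain a P S where c: "x = P @ S" "a \<in> set P" "a \<notin> set S" "Suc a \<in> set S" "Suc a \<notin> set P"
      "y = map (sw a) x"
    using assms(1) by (auto simp: cov_def)
  have py: "packed y" using assms(2) cov_set[OF assms(1)] by (simp add: packed_def)
  have swa: "sw a a = Suc a" "sw a (Suc a) = a" by (auto simp: sw_def)
  have posa: "\<And>p. p \<in> positions x a \<Longrightarrow> p < length P"
  proof -
    fix p assume p: "p \<in> positions x a"
    show "p < length P"
    proof (rule ccontr)
      assume "\<not> p < length P"
      then have "S ! (p - length P) = a" "p - length P < length S" using p c(1)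
        by (auto simp: positions_def nth_append)
      then show False using c(3) by (metis nth_mem)
    qed
  qed
  have posb: "\<And>p. p \<in> positions x (Suc a) \<Longrightarrow> length P \<le> p"
  proof -
    fix p assume p: "p \<in> positions x (Suc a)"
    show "length P \<le> p"
    proof (rule ccontr)
      assume "\<not> length P \<le> p"
      then have "P ! p = Suc a" "p < length P" using p c(1)
        by (auto simp: positions_def nth_append)
      then show False using c(5) by (metis nth_mem)
    qed
  qed
  have ax: "a \<in> set x" "Suc a \<in> set x" using c by auto
  have fin: "\<And>v. finite (positions x v)" by (simp add: positions_def)
  have ne: "\<And>v. v \<in> set x \<Longrightarrow> positions x v \<noteq> {}" by (auto simp: positions_def in_set_conv_nth)
  have mm: "Max (positions x a) < Min (positions x (Suc a))"
    using posa posb fin ne[OF ax(1)] ne[OF ax(2)]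
    by (meson Max_in Min_in less_le_trans)
  have mm2: "Min (positions x a) < Max (positions x (Suc a))"
    using posa posb fin ne[OF ax(1)] ne[OF ax(2)]
    by (meson Max_in Min_in less_le_trans)
  have pa: "positions y a = positions x (Suc a)" "positions y (Suc a) = positions x a"
    using positions_sw[of a x] c(6) swa by auto
  have ay: "a \<in> set y" "Suc a \<in> set y" using set_sw[of _ a x] c(6) swa ax by auto
  have in_y: "(a, Suc a) \<in> iInv y" using mm pa ay by (simp add: iInv_def)
  have nin_x: "(a, Suc a) \<notin> iInv x" using mm2 by (simp add: iInv_def)
  have "iInv y = insert (a, Suc a) (F a ` iInv x)"
    using iInv_F[of a x] c(6) in_y nin_x by auto
  moreover have "(a, Suc a) \<notin> F a ` iInv x"
  proof
    assume "(a, Suc a) \<in> F a ` iInv x"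
    then obtain p q where "(p,q) \<in> iInv x" "sw a p = a" "sw a q = Suc a" by (auto simp: F_def)
    then show False by (auto simp: sw_def iInv_def split: if_splits)
  qed
  moreover have "card (F a ` iInv x) = card (iInv x)"
    by (rule card_image) (meson inj_F inj_on_subset subset_UNIV)
  ultimately have "card (iInv y) = card (iInv x) + 1"
    by (simp add: finite_iInv)
  moreover have "x = swapT a y" using c(6) by (simp add: swapT_sw comp_def)
  ultimately show ?thesis using py assms(2) by (auto simp: pw_cover_def)
qed



lemma pw_pt: "pw_le x y \<Longrightarrow> pt_le (dec x) (dec y)"
  unfolding pw_le_def pt_le_def
proof (induction rule: rtranclp_induct)
  case base then show ?case by simp
next
  case (step y z)
  obtain a P S where c: "y = P @ S" "a \<notin> set S" "Suc a \<notin> set P" "z = map (sw a) y"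
    using pw_cover_dec[OF step(2)] by blast
  have "dec z = dec y \<or> lrot (dec y) (dec z)" using rot_swap[OF c(2) c(3)] c(1) c(4) by simp
  then show ?case using step(3) by (auto intro: rtranclp.rtrancl_into_rtrancl)
qed

fun nin :: "ptree \<Rightarrow> nat" where
  "nin Leaf = 0"
| "nin (Node cs) = Suc (sum_list (map nin cs))"

abbreviation ninl :: "ptree list \<Rightarrow> nat" where
  "ninl cs \<equiv> sum_list (map nin cs)"

fun can :: "nat \<Rightarrow> ptree \<Rightarrow> ltree" and canl :: "nat \<Rightarrow> ptree list \<Rightarrow> ltree list" where
  "can b Leaf = LLeaf"
| "can b (Node cs) = LNode (Suc b) (canl (Suc b) cs)"
| "canl b [] = []"
| "canl b (c # cs) = can (b + ninl cs) c # canl b cs"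

lemma strip_can: "strip (can b t) = t" and strip_canl: "map strip (canl b cs) = cs"
  by (induction b t and b cs rule: can_canl.induct) auto

lemma labels_can: "distinct (labels (can b t)) \<and> set (labels (can b t)) = {Suc b..b + nin t}"
  and labels_canl: "distinct (concat (map labels (canl b cs))) \<and> set (concat (map labels (canl b cs))) = {Suc b..b + ninl cs}"
proof (induction b t and b cs rule: can_canl.induct)
  case (1 b) then show ?case by simp
next
  case (2 b cs)
  then show ?case by auto
next
  case (3 b) then show ?case by simp
next
  case (4 b c cs)
  have d: "set (labels (can (b + ninl cs) c)) \<inter> set (concat (map labels (canl b cs))) = {}"
    using 4 by auto
  show ?case using 4 d by (auto simp: ivl_disj_un)
qed

lemma len_labels: "length (labels u) = nin (strip u)"
  by (induction u) (auto simp: length_concat comp_def intro!: arg_cong[where f=sum_list])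

lemma incr_can: "lbl_incr (can b t)"
  and incr_canl: "\<forall>c\<in>set (canl b cs). lbl_incr c \<and> (\<forall>k ds. c = LNode k ds \<longrightarrow> b < k)"
proof (induction b t and b cs rule: can_canl.induct)
  case (1 b) then show ?case by simp
next
  case (2 b cs) then show ?case by auto
next
  case (3 b) then show ?case by simp
next
  case (4 b c cs)
  have "\<forall>k ds. can (b + ninl cs) c = LNode k ds \<longrightarrow> b < k"
    by (cases c) auto
  then show ?case using 4 by auto
qed

lemma labels_word: "wf_ptree (strip u) \<Longrightarrow> set (labels u) = set (word u)"
proof (induction u)
  case LLeaf then show ?case by simp
next
  case (LNode k cs)
  have ne: "map word cs \<noteq> []" and l2: "2 \<le> length cs" using LNode(2) by auto
  have "set (word (LNode k cs)) = (\<Union>c\<in>set cs. set (word c)) \<union> {k}"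
    using set_join[OF ne, of k] l2 by (simp add: word_join)
  also have "\<dots> = (\<Union>c\<in>set cs. set (labels c)) \<union> {k}" using LNode by auto
  finally show ?case by auto
qed

lemma gsp_can: "wf_ptree t \<Longrightarrow> gsp (can 0 t)"
  using labels_can[of 0 t] incr_can[of 0 t] len_labels[of "can 0 t"]
  by (simp add: gsp_def strip_can)



lemma av_comp:
  assumes "avoids213 A" "avoids213 B" "\<forall>a\<in>set A. \<forall>v\<in>set B. v < a" "\<forall>a\<in>set A. k < a" "\<forall>v\<in>set B. k \<le> v"
  shows "avoids213 (A @ k # B)"
  unfolding avoids213_def
proof (rule notI, elim exE conjE)
  fix i j l assume ij: "i < j" "j < l" "l < length (A @ k # B)"
    and v: "(A @ k # B) ! j < (A @ k # B) ! i" "(A @ k # B) ! i < (A @ k # B) ! l"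
  let ?n = "length A"
  consider "l < ?n" | "?n < i" | "i < ?n" "?n \<le> l" | "i = ?n" by linarith
  then show False
  proof cases
    case 1
    then show False using assms(1) ij v unfolding avoids213_def
      by (auto simp: nth_append)
  next
    case 2
    then have "(i - Suc ?n) < (j - Suc ?n)" "(j - Suc ?n) < (l - Suc ?n)" "(l - Suc ?n) < length B"
      using ij by auto
    moreover have "B ! (j - Suc ?n) < B ! (i - Suc ?n)" "B ! (i - Suc ?n) < B ! (l - Suc ?n)"
      using v 2 ij by (auto simp: nth_append nth_Cons')
    ultimately show False using assms(2) unfolding avoids213_def by blast
  next
    case 3
    have ai: "(A @ k # B) ! i \<in> set A" using 3 by (simp add: nth_append)
    show False
    proof (cases "l = ?n")
      case True
      then have "(A @ k # B) ! l = k" by (simp add: nth_append)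
      then show False using v(2) ai assms(4) by fastforce
    next
      case False
      then have "(A @ k # B) ! l = B ! (l - Suc ?n)" "l - Suc ?n < length B" using 3 ij by (auto simp: nth_append nth_Cons')
      then have "(A @ k # B) ! l \<in> set B" by simp
      then show False using v(2) ai assms(3) by fastforce
    qed
  next
    case 4
    then have "(A @ k # B) ! i = k" by (simp add: nth_append)
    moreover have "(A @ k # B) ! j = B ! (j - Suc ?n)" "j - Suc ?n < length B" using 4 ij by (auto simp: nth_append nth_Cons')
    ultimately show False using v(1) assms(5) by (metis nth_mem not_le)
  qed
qed

lemma av_prefix: "avoids213 (A @ B) \<Longrightarrow> avoids213 A"
  unfolding avoids213_def
proof (rule notI, elim exE conjE)
  fix i j l assume h: "\<not> (\<exists>i j k. i < j \<and> j < k \<and> k < length (A @ B) \<and> (A @ B) ! j < (A @ B) ! i \<and> (A @ B) ! i < (A @ B) ! k)"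
    "i < j" "j < l" "l < length A" "A ! j < A ! i" "A ! i < A ! l"
  have "(A @ B) ! i = A ! i" "(A @ B) ! j = A ! j" "(A @ B) ! l = A ! l" using h by (auto simp: nth_append)
  then show False using h by (metis length_append trans_less_add1)
qed

lemma av_suffix: "avoids213 (A @ B) \<Longrightarrow> avoids213 B"
  unfolding avoids213_def
proof (rule notI, elim exE conjE)
  fix i j l assume h: "\<not> (\<exists>i j k. i < j \<and> j < k \<and> k < length (A @ B) \<and> (A @ B) ! j < (A @ B) ! i \<and> (A @ B) ! i < (A @ B) ! k)"
    "i < j" "j < l" "l < length B" "B ! j < B ! i" "B ! i < B ! l"
  then show False
    by (metis add_less_cancel_left length_append nth_append_length_plus)
qed

lemma av_sep: "avoids213 (A @ k # B) \<Longrightarrow> \<forall>a\<in>set A. k < a \<Longrightarrow> a \<in> set A \<Longrightarrow> v \<in> set B \<Longrightarrow> \<not> a < v"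
proof
  assume h: "avoids213 (A @ k # B)" "\<forall>a\<in>set A. k < a" "a \<in> set A" "v \<in> set B" "a < v"
  obtain i where i: "i < length A" "A ! i = a" using h(3) by (auto simp: in_set_conv_nth)
  obtain j where j: "j < length B" "B ! j = v" using h(4) by (auto simp: in_set_conv_nth)
  have "i < length A" "length A < length A + Suc j" "length A + Suc j < length (A @ k # B)"
    using i j by auto
  moreover have "(A @ k # B) ! length A < (A @ k # B) ! i" using i h(2) h(3) by (simp add: nth_append)
  moreover have "(A @ k # B) ! i < (A @ k # B) ! (length A + Suc j)" using i j h(5) by (simp add: nth_append)
  ultimately show False using h(1) unfolding avoids213_def by blast
qed

lemma join_cons: "Ws \<noteq> [] \<Longrightarrow> join k (W # Ws) = W @ k # join k Ws"
  by (cases Ws) auto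

lemma word_can_range: "set (word (can b t)) \<subseteq> {Suc b..b + nin t}"
  using word_sub_labels[of "can b t"] labels_can[of b t] by simp

lemma join_canl_range: "set (join b (map word (canl b cs))) \<subseteq> insert b {Suc b..b + ninl cs}"
proof -
  have "set (join b (map word (canl b cs))) \<subseteq> insert b (\<Union>Q\<in>set (map word (canl b cs)). set Q)"
    by (rule set_join_sub)
  also have "\<dots> \<subseteq> insert b (set (concat (map labels (canl b cs))))"
    using word_sub_labels by fastforce
  finally show ?thesis using labels_canl[of b cs] by simp
qed

lemma av_can: "avoids213 (word (can b t))" and av_canl: "avoids213 (join b (map word (canl b cs)))"
proof (induction b t and b cs rule: can_canl.induct)
  case (1 b) then show ?case by (simp add: avoids213_def)
next
  case (2 b cs) then show ?case by (simp add: word_join)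
next
  case (3 b) then show ?case by (simp add: avoids213_def)
next
  case (4 b c cs)
  show ?case
  proof (cases "cs = []")
    case True then show ?thesis using 4 by simp
  next
    case False
    have eq: "join b (map word (canl b (c # cs))) = word (can (b + ninl cs) c) @ b # join b (map word (canl b cs))"
      using False by (cases cs) auto
    have r1: "set (word (can (b + ninl cs) c)) \<subseteq> {Suc (b + ninl cs)..b + ninl cs + nin c}"
      by (rule word_can_range)
    have r2: "set (join b (map word (canl b cs))) \<subseteq> insert b {Suc b..b + ninl cs}"
      by (rule join_canl_range)
    show ?thesis unfolding eq
    proof (rule av_comp)
      show "avoids213 (word (can (b + ninl cs) c))" using 4 by simp
      show "avoids213 (join b (map word (canl b cs)))" using 4 by simp
      show "\<forall>a\<in>set (word (can (b + ninl cs) c)). \<forall>v\<in>set (join b (map word (canl b cs))). v < a"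
        using r1 r2 by fastforce
      show "\<forall>a\<in>set (word (can (b + ninl cs) c)). b < a" using r1 by fastforce
      show "\<forall>v\<in>set (join b (map word (canl b cs))). b \<le> v" using r2 by fastforce
    qed
  qed
qed

lemma ivl_split:
  fixes lo n m :: nat
  assumes "A \<union> B = {Suc lo..lo+n}" "A \<inter> B = {}" "\<forall>a\<in>A. \<forall>v\<in>B. v < a" "card B = m"
  shows "B = {Suc lo..lo+m} \<and> A = {Suc (lo+m)..lo+n}"
proof -
  have finB: "finite B" using assms(1) by (metis finite_Un finite_atLeastAtMost)
  have mn: "m \<le> n"
  proof -
    have "card B \<le> card {Suc lo..lo+n}" using assms(1) by (intro card_mono) auto
    then show ?thesis using assms(4) by simp
  qed
  have Agt: "\<forall>x\<in>A. lo + m < x"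
  proof (rule ballI, rule ccontr)
    fix x assume x: "x \<in> A" "\<not> lo + m < x"
    have "B \<subseteq> {Suc lo..<x}" using assms(1) assms(3) x(1) by fastforce
    then have "card B \<le> card {Suc lo..<x}" by (intro card_mono) auto
    also have "\<dots> < m"
    proof -
      have "x \<in> {Suc lo..lo+n}" using assms(1) x(1) by blast
      then show ?thesis using x(2) by auto
    qed
    finally show False using assms(4) by simp
  qed
  have sub: "{Suc lo..lo+m} \<subseteq> B"
  proof
    fix v assume v: "v \<in> {Suc lo..lo+m}"
    then have "v \<in> A \<union> B" using assms(1) mn by auto
    moreover have "v \<notin> A" using Agt v by auto
    ultimately show "v \<in> B" by blast
  qed
  have Beq: "B = {Suc lo..lo+m}"
    using card_subset_eq[OF finB sub] assms(4) by simp
  moreover have "A = {Suc lo..lo+n} - B" using assms(1) assms(2) by blast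
  moreover have "{Suc lo..lo+n} - {Suc lo..lo+m} = {Suc (lo+m)..lo+n}" by auto
  ultimately show ?thesis by simp
qed



lemma set_word_join: "c \<in> set Ws \<Longrightarrow> set c \<subseteq> set (join k Ws)"
proof -
  assume c: "c \<in> set Ws"
  then obtain W Ws' where Ws: "Ws = W # Ws'" by (cases Ws) auto
  show ?thesis using c unfolding Ws by auto
qed

lemma uniq_list:
  "(\<forall>c\<in>set cs. good c \<and> (\<forall>b. distinct (labels c) \<longrightarrow> set (labels c) = {Suc b..b + length (labels c)}
       \<longrightarrow> avoids213 (word c) \<longrightarrow> c = can b (strip c))) \<Longrightarrow>
   distinct (concat (map labels cs)) \<Longrightarrow>
   set (concat (map labels cs)) = {Suc b..b + length (concat (map labels cs))} \<Longrightarrow>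
   avoids213 (join b (map word cs)) \<Longrightarrow>
   (\<forall>c\<in>set cs. \<forall>l\<in>set (labels c). b < l) \<Longrightarrow>
   cs = canl b (map strip cs)"
proof (induction cs)
  case Nil then show ?case by simp
next
  case (Cons c cs')
  show ?case
  proof (cases "cs' = []")
    case True
    then show ?thesis using Cons(2-5) by simp
  next
    case False
    have ne: "map word cs' \<noteq> []" using False by simp
    have jeq: "join b (map word (c # cs')) = word c @ b # join b (map word cs')"
      using join_cons[OF ne] by simp
    have av: "avoids213 (word c @ b # join b (map word cs'))" using Cons(5) jeq by simp
    have av1: "avoids213 (word c)" using av_prefix av by blast
    have av2: "avoids213 (join b (map word cs'))" using av_suffix[of "word c @ [b]"] av by simp
    have gc: "good c" using Cons(2) by simp
    have lw: "set (labels c) = set (word c)" using labels_word gc by (simp add: good_def)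
    have gtb: "\<forall>a\<in>set (word c). b < a" using Cons(6) lw by simp
    define A where "A = set (labels c)"
    define Bs where "Bs = set (concat (map labels cs'))"
    have dis: "A \<inter> Bs = {}" using Cons(3) by (simp add: A_def Bs_def)
    have Bsub: "Bs \<subseteq> set (join b (map word cs'))"
    proof
      fix v assume "v \<in> Bs"
      then obtain c' where c': "c' \<in> set cs'" "v \<in> set (labels c')" by (auto simp: Bs_def)
      have "good c'" using Cons(2) c'(1) by simp
      then have "v \<in> set (word c')" using labels_word c'(2) by (simp add: good_def)
      then show "v \<in> set (join b (map word cs'))" using set_word_join[of "word c'" "map word cs'" b] c'(1) by auto
    qed
    have decr: "\<forall>a\<in>A. \<forall>v\<in>Bs. v < a"
    proof (intro ballI)
      fix a v assume a: "a \<in> A" and v: "v \<in> Bs"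
      have "\<not> a < v" using av_sep[OF av gtb] a v Bsub lw by (auto simp: A_def)
      moreover have "a \<noteq> v" using dis a v by auto
      ultimately show "v < a" by simp
    qed
    define M where "M = length (concat (map labels cs'))"
    define N where "N = length (concat (map labels (c # cs')))"
    have NM: "N = length (labels c) + M" by (simp add: N_def M_def)
    have un: "A \<union> Bs = {Suc b..b + N}" using Cons(4) by (simp add: A_def Bs_def N_def)
    have "distinct (concat (map labels cs'))" using Cons(3) by simp
    then have cB: "card Bs = M" unfolding Bs_def M_def by (rule distinct_card)
    have spl: "Bs = {Suc b..b + M} \<and> A = {Suc (b + M)..b + N}"
      by (rule ivl_split[OF un dis decr cB])
    have IH: "cs' = canl b (map strip cs')"
      using Cons(1) Cons(2) Cons(3) spl av2 Cons(6) by (simp add: Bs_def M_def)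
    have cc: "c = can (b + M) (strip c)"
      using Cons(2) Cons(3) spl av1 NM by (simp add: A_def add.assoc)
    have Mn: "M = ninl (map strip cs')"
      unfolding M_def by (simp add: length_concat comp_def len_labels)
    show ?thesis using IH cc Mn by simp
  qed
qed

lemma uniq: "good u \<Longrightarrow> distinct (labels u) \<Longrightarrow> set (labels u) = {Suc b..b + length (labels u)} \<Longrightarrow>
    avoids213 (word u) \<Longrightarrow> u = can b (strip u)"
proof (induction u arbitrary: b)
  case LLeaf then show ?case by simp
next
  case (LNode k cs)
  have kin: "k \<in> set (labels (LNode k cs))" by simp
  have sin: "Suc b \<in> set (labels (LNode k cs))" using LNode(4) by simp
  have "k \<le> Suc b" using lbl_lower[of "LNode k cs" k cs "Suc b"] LNode(2) sin by (simp add: good_def)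
  moreover have "Suc b \<le> k" using LNode(4) kin by auto
  ultimately have kb: "k = Suc b" by simp
  have gcs: "\<forall>c\<in>set cs. good c" using LNode(2) by (auto simp: good_def)
  have H1: "\<forall>c\<in>set cs. good c \<and> (\<forall>b. distinct (labels c) \<longrightarrow> set (labels c) = {Suc b..b + length (labels c)}
       \<longrightarrow> avoids213 (word c) \<longrightarrow> c = can b (strip c))"
    using LNode(1) gcs by blast
  have H2: "distinct (concat (map labels cs))" using LNode(3) by simp
  have knot: "k \<notin> set (concat (map labels cs))" using LNode(3) by simp
  have H3: "set (concat (map labels cs)) = {Suc (Suc b)..Suc b + length (concat (map labels cs))}"
  proof -
    have "insert k (set (concat (map labels cs))) = {Suc b..Suc b + length (concat (map labels cs))}"
      using LNode(4) by simp
    then have "set (concat (map labels cs)) = {Suc b..Suc b + length (concat (map labels cs))} - {k}"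
      using knot by blast
    then show ?thesis using kb by auto
  qed
  have H4: "avoids213 (join (Suc b) (map word cs))" using LNode(5) kb by (simp add: word_join)
  have H5: "\<forall>c\<in>set cs. \<forall>l\<in>set (labels c). Suc b < l"
    using lbl_child[of k cs] LNode(2) kb by (auto simp: good_def)
  have "cs = canl (Suc b) (map strip cs)" by (rule uniq_list[OF H1 H2 H3 H4 H5])
  then show ?case using kb by simp
qed

lemma iota_eq: "wf_ptree t \<Longrightarrow> \<iota> t = can 0 t"
  unfolding \<iota>_def
proof (rule the_equality)
  assume wf: "wf_ptree t"
  show "gsp (can 0 t) \<and> strip (can 0 t) = t \<and> avoids213 (word (can 0 t))"
    using gsp_can[OF wf] strip_can av_can by simp
  fix v assume v: "gsp v \<and> strip v = t \<and> avoids213 (word v)"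
  have "v = can 0 (strip v)"
    by (rule uniq) (use v wf in \<open>auto simp: gsp_def good_def\<close>)
  then show "v = can 0 t" using v by simp
qed



abbreviation covs :: "nat list \<Rightarrow> nat list \<Rightarrow> bool" where
  "covs \<equiv> cov\<^sup>*\<^sup>*"

lemma covs_set: "covs x y \<Longrightarrow> set y = set x"
  by (induction rule: rtranclp_induct) (auto dest: cov_set)

lemma covs_pw: "covs x y \<Longrightarrow> packed x \<Longrightarrow> pw_le x y"
  unfolding pw_le_def
proof (induction rule: rtranclp_induct)
  case base then show ?case by simp
next
  case (step y z)
  have "packed y" using step(4) covs_set[OF step(1)] by (simp add: packed_def)
  then have "pw_cover y z" using cov_pw[OF step(2)] by simp
  then show ?case using step(3)[OF step(4)] by (simp add: rtranclp.rtrancl_into_rtrancl)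
qed

lemma cov_ctx:
  assumes "cov x y" "\<forall>v\<in>set x. v \<notin> set L \<and> v \<notin> set R"
  shows "cov (L @ x @ R) (L @ y @ R)"
proof -
  obtain a P S where c: "x = P @ S" "a \<in> set P" "a \<notin> set S" "Suc a \<in> set S" "Suc a \<notin> set P"
      "y = map (sw a) x"
    using assms(1) by (auto simp: cov_def)
  have n: "a \<notin> set L" "a \<notin> set R" "Suc a \<notin> set L" "Suc a \<notin> set R" using assms(2) c by auto
  have "L @ y @ R = map (sw a) (L @ x @ R)" using c(6) map_sw_id[OF n(1) n(3)] map_sw_id[OF n(2) n(4)] by simp
  moreover have "L @ x @ R = (L @ P) @ (S @ R)" using c(1) by simp
  ultimately show ?thesis unfolding cov_def using c n
    by (intro exI[of _ a] exI[of _ "L @ P"] exI[of _ "S @ R"]) auto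
qed

lemma covs_ctx:
  assumes "covs x y" "\<forall>v\<in>set x. v \<notin> set L \<and> v \<notin> set R"
  shows "covs (L @ x @ R) (L @ y @ R)"
  using assms
proof (induction rule: rtranclp_induct)
  case base then show ?case by simp
next
  case (step y z)
  have "\<forall>v\<in>set y. v \<notin> set L \<and> v \<notin> set R" using step(4) covs_set[OF step(1)] by simp
  then have "cov (L @ y @ R) (L @ z @ R)" using cov_ctx[OF step(2)] by simp
  then show ?case using step(3)[OF step(4)] by (simp add: rtranclp.rtrancl_into_rtrancl)
qed

definition rot :: "nat \<Rightarrow> nat \<Rightarrow> nat \<Rightarrow> nat" where
  "rot lo n v = (if v = lo then lo + n else if lo < v \<and> v \<le> lo + n then v - 1 else v)"

lemma rot_step: "rot (Suc lo) n (sw lo v) = rot lo (Suc n) v"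
  by (auto simp: rot_def sw_def)

lemma rot_0: "rot lo 0 v = v"
  by (simp add: rot_def)

lemma shift_chain:
  assumes "lo \<in> set X" "\<forall>v\<in>set X. v = lo \<or> v < lo \<or> lo + n < v"
    "\<forall>v\<in>set Y. v < lo \<or> lo + n < v \<or> (lo < v \<and> v \<le> lo + n)"
    "{Suc lo..lo + n} \<subseteq> set Y"
  shows "covs (X @ Y) (map (rot lo n) (X @ Y))"
  using assms
proof (induction n arbitrary: lo X Y)
  case 0
  then show ?case by (simp add: rot_0)
next
  case (Suc n)
  have SY: "Suc lo \<in> set Y" using Suc(5) by auto
  have lY: "lo \<notin> set Y" using Suc(4) by fastforce
  have SX: "Suc lo \<notin> set X" using Suc(3) by fastforce
  have c1: "cov (X @ Y) (map (sw lo) (X @ Y))"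
    unfolding cov_def using Suc(2) SY lY SX by blast
  define X1 where "X1 = map (sw lo) X"
  define Y1 where "Y1 = map (sw lo) Y"
  have a1: "Suc lo \<in> set X1" using Suc(2) by (force simp: X1_def sw_def)
  have a2: "\<forall>v\<in>set X1. v = Suc lo \<or> v < Suc lo \<or> Suc lo + n < v"
    using Suc(3) by (auto simp: X1_def sw_def)
  have a3: "\<forall>v\<in>set Y1. v < Suc lo \<or> Suc lo + n < v \<or> (Suc lo < v \<and> v \<le> Suc lo + n)"
    using Suc(4) by (auto simp: Y1_def sw_def)
  have a4: "{Suc (Suc lo)..Suc lo + n} \<subseteq> set Y1"
  proof
    fix v assume v: "v \<in> {Suc (Suc lo)..Suc lo + n}"
    then have "v \<in> set Y" using Suc(5) by auto
    moreover have "sw lo v = v" using v by (auto simp: sw_def)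
    ultimately show "v \<in> set Y1" unfolding Y1_def by (metis image_eqI set_map)
  qed
  have IH: "covs (X1 @ Y1) (map (rot (Suc lo) n) (X1 @ Y1))" by (rule Suc(1)[OF a1 a2 a3 a4])
  have e1: "map (rot (Suc lo) n) (X1 @ Y1) = map (rot lo (Suc n)) (X @ Y)"
    by (simp add: X1_def Y1_def rot_step)
  have e2: "X1 @ Y1 = map (sw lo) (X @ Y)" by (simp add: X1_def Y1_def)
  have "covs (X1 @ Y1) (map (rot lo (Suc n)) (X @ Y))" using IH by (simp only: e1)
  then have "covs (map (sw lo) (X @ Y)) (map (rot lo (Suc n)) (X @ Y))" by (simp only: e2)
  then show ?case using c1 by (meson converse_rtranclp_into_rtranclp)
qed

lemma map_join: "map f (join k Ws) = join (f k) (map (map f) Ws)"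
  by (cases Ws) (auto simp: map_concat comp_def)

lemma map_id_on: "(\<And>v. v \<in> set W \<Longrightarrow> f v = v) \<Longrightarrow> map f W = W"
  by (simp add: map_idI)



lemma canl_append: "canl b (xs @ ys) = canl (b + ninl ys) xs @ canl b ys"
  by (induction xs) (auto simp: add.assoc add.commute add.left_commute)

lemma can_Suc: "can (Suc b) t = relabel Suc (can b t)" and canl_Suc: "canl (Suc b) cs = map (relabel Suc) (canl b cs)"
  by (induction b t and b cs rule: can_canl.induct) auto

lemma join_snoc: "Ws \<noteq> [] \<Longrightarrow> join k (Ws @ [W]) = join k Ws @ k # W"
  by (cases Ws) auto

lemma word_can_set: "wf_ptree t \<Longrightarrow> set (word (can b t)) = {Suc b..b + nin t}"
  using labels_word[of "can b t"] labels_can[of b t] by (simp add: strip_can)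

lemma words_canl_set: "\<forall>c\<in>set cs. wf_ptree c \<Longrightarrow> (\<Union>W\<in>set (map word (canl b cs)). set W) = {Suc b..b + ninl cs}"
proof -
  assume wf: "\<forall>c\<in>set cs. wf_ptree c"
  have "\<And>c'. c' \<in> set (canl b cs) \<Longrightarrow> set (word c') = set (labels c')"
  proof -
    fix c' assume c': "c' \<in> set (canl b cs)"
    have "strip c' \<in> set cs" using c' strip_canl[of b cs] by (metis image_eqI set_map)
    then show "set (word c') = set (labels c')" using labels_word wf by metis
  qed
  then have "(\<Union>W\<in>set (map word (canl b cs)). set W) = set (concat (map labels (canl b cs)))" by auto
  then show ?thesis using labels_canl[of b cs] by simp
qed

lemma set_join_ne: "Ws \<noteq> [] \<Longrightarrow> (\<Union>W\<in>set Ws. set W) \<subseteq> set (join k Ws)"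
  using set_join by fastforce

lemma rot_root:
  assumes cs: "cs \<noteq> []" and ds: "ds \<noteq> []" and wf: "wf_ptree (Node (cs @ [Node (d1 # ds)]))"
  shows "covs (word (can b (Node (cs @ [Node (d1 # ds)])))) (word (can b (Node (Node (cs @ [d1]) # ds))))"
proof -
  define M where "M = ninl ds"
  define y where "y = Node (d1 # ds)"
  define ny where "ny = nin y"
  have nyM: "ny = Suc (nin d1 + M)" by (simp add: ny_def y_def M_def)
  define Cw where "Cw = map word (canl (Suc b + ny) cs)"
  define D1 where "D1 = word (can (Suc (Suc b) + M) d1)"
  define Dw where "Dw = map word (canl (Suc (Suc b)) ds)"
  define Dw' where "Dw' = map word (canl (Suc b) ds)"
  have Cwne: "Cw \<noteq> []" using cs by (cases cs) (auto simp: Cw_def)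
  have Dwne: "Dw \<noteq> []" using ds by (cases ds) (auto simp: Dw_def)
  have Dw'ne: "Dw' \<noteq> []" using ds by (cases ds) (auto simp: Dw'_def)
  have wfcs: "\<forall>c\<in>set cs. wf_ptree c" and wfd1: "wf_ptree d1" and wfds: "\<forall>c\<in>set ds. wf_ptree c"
    using wf by auto
  have Cset: "(\<Union>W\<in>set Cw. set W) = {Suc (Suc b + ny)..Suc b + ny + ninl cs}"
    unfolding Cw_def by (rule words_canl_set[OF wfcs])
  have D1set: "set D1 = {Suc (Suc (Suc b) + M)..Suc (Suc b) + M + nin d1}"
    unfolding D1_def by (rule word_can_set[OF wfd1])
  have Dwset: "(\<Union>W\<in>set Dw. set W) = {Suc (Suc (Suc b))..Suc (Suc b) + M}"
    unfolding Dw_def M_def by (rule words_canl_set[OF wfds])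
  have Dw'set: "(\<Union>W\<in>set Dw'. set W) = {Suc (Suc b)..Suc b + M}"
    unfolding Dw'_def M_def by (rule words_canl_set[OF wfds])
  have Dw_eq: "Dw = map (map Suc) Dw'"
    by (simp add: Dw_def Dw'_def canl_Suc word_relabel)
  have E1: "word (can b (Node (cs @ [y]))) = (join (Suc b) Cw @ [Suc b]) @ (D1 @ Suc (Suc b) # join (Suc (Suc b)) Dw)"
  proof -
    have "can b (Node (cs @ [y])) = LNode (Suc b) (canl (Suc b + ny) cs @ [can (Suc b) y])"
      by (simp add: canl_append ny_def)
    then have "word (can b (Node (cs @ [y]))) = join (Suc b) Cw @ Suc b # word (can (Suc b) y)"
    proof -
      have ne: "map word (canl (Suc (b + ny)) cs) \<noteq> []" using Cwne by (simp add: Cw_def)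
      show "word (can b (Node (cs @ [y]))) = join (Suc b) Cw @ Suc b # word (can (Suc b) y)"
        using \<open>can b (Node (cs @ [y])) = _\<close> by (simp add: word_join Cw_def join_snoc[OF ne])
    qed
    moreover have "word (can (Suc b) y) = D1 @ Suc (Suc b) # join (Suc (Suc b)) Dw"
      using join_cons[OF Dwne, of "Suc (Suc b)" D1] by (simp add: y_def word_join D1_def Dw_def M_def)
    ultimately show ?thesis by simp
  qed
  have E2: "word (can b (Node (Node (cs @ [d1]) # ds))) =
      join (Suc (Suc b) + M) Cw @ (Suc (Suc b) + M) # D1 @ Suc b # join (Suc b) Dw'"
  proof -
    define Z where "Z = LNode (Suc (Suc b + M)) (canl (Suc b + ny) cs @ [can (Suc (Suc b + M)) d1])"
    have eqc: "can b (Node (Node (cs @ [d1]) # ds)) = LNode (Suc b) (Z # canl (Suc b) ds)"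
      unfolding Z_def by (simp add: canl_append M_def nyM algebra_simps)
    have "word (can b (Node (Node (cs @ [d1]) # ds))) = word (LNode (Suc b) (Z # canl (Suc b) ds))"
      by (simp only: eqc)
    also have "\<dots> = word Z @ Suc b # join (Suc b) Dw'"
      using join_cons[OF Dw'ne, of "Suc b" "word Z"] by (simp only: word_join list.map Dw'_def)
    also have "word Z = join (Suc (Suc b) + M) Cw @ (Suc (Suc b) + M) # D1"
      using join_snoc[OF Cwne] unfolding Z_def by (simp add: word_join Cw_def D1_def)
    finally show ?thesis by simp
  qed
  define P where "P = join (Suc b) Cw @ [Suc b]"
  define S where "S = D1 @ Suc (Suc b) # join (Suc (Suc b)) Dw"
  have Pset: "set P \<subseteq> insert (Suc b) {Suc (Suc b + ny)..Suc b + ny + ninl cs}"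
    using set_join_sub[of "Suc b" Cw] Cset by (auto simp: P_def)
  have Sset: "set S \<subseteq> set D1 \<union> insert (Suc (Suc b)) {Suc (Suc (Suc b))..Suc (Suc b) + M}"
    using set_join_sub[of "Suc (Suc b)" Dw] Dwset by (auto simp: S_def)
  have c1: "cov (P @ S) (map (sw (Suc b)) (P @ S))"
    unfolding cov_def
  proof (intro exI conjI)
    show "Suc b \<in> set P" by (simp add: P_def)
    show "Suc b \<notin> set S" using Sset D1set by fastforce
    show "Suc (Suc b) \<in> set S" by (simp add: S_def)
    show "Suc (Suc b) \<notin> set P" using Pset nyM by fastforce
  qed simp_all
  define X where "X = map (sw (Suc b)) P"
  define Y where "Y = map (sw (Suc b)) S"
  have X1: "Suc (Suc b) \<in> set X" by (force simp: X_def P_def sw_def)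
  have X2: "\<forall>v\<in>set X. v = Suc (Suc b) \<or> v < Suc (Suc b) \<or> Suc (Suc b) + M < v"
    using Pset nyM by (fastforce simp: X_def sw_def)
  have Y2: "\<forall>v\<in>set Y. v < Suc (Suc b) \<or> Suc (Suc b) + M < v \<or> (Suc (Suc b) < v \<and> v \<le> Suc (Suc b) + M)"
    using Sset D1set by (fastforce simp: Y_def sw_def)
  have Y3: "{Suc (Suc (Suc b))..Suc (Suc b) + M} \<subseteq> set Y"
  proof
    fix v assume v: "v \<in> {Suc (Suc (Suc b))..Suc (Suc b) + M}"
    then have "v \<in> set S" using Dwset set_join_ne[OF Dwne, of "Suc (Suc b)"] by (auto simp: S_def)
    moreover have "sw (Suc b) v = v" using v by (auto simp: sw_def)
    ultimately show "v \<in> set Y" unfolding Y_def by (metis image_eqI set_map)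
  qed
  have c2: "covs (X @ Y) (map (rot (Suc (Suc b)) M) (X @ Y))"
    by (rule shift_chain[OF X1 X2 Y2 Y3])
  define g where "g = rot (Suc (Suc b)) M \<circ> sw (Suc b)"
  have XY: "X @ Y = map (sw (Suc b)) (P @ S)" by (simp add: X_def Y_def)
  have chain: "covs (P @ S) (map g (P @ S))"
    using c1 c2 unfolding XY g_def by (simp add: converse_rtranclp_into_rtranclp)
  have g1: "\<And>v. Suc (Suc b) + M < v \<Longrightarrow> g v = v" by (auto simp: g_def rot_def sw_def)
  have g2: "g (Suc b) = Suc (Suc b) + M" by (auto simp: g_def rot_def sw_def)
  have g3: "g (Suc (Suc b)) = Suc b" by (auto simp: g_def rot_def sw_def)
  have g4: "\<And>v. Suc (Suc b) \<le> v \<Longrightarrow> v \<le> Suc b + M \<Longrightarrow> g (Suc v) = v" by (auto simp: g_def rot_def sw_def)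
  have mC: "map (map g) Cw = Cw"
  proof (rule map_id_on)
    fix W assume W: "W \<in> set Cw"
    show "map g W = W"
    proof (rule map_id_on)
      fix v assume "v \<in> set W"
      then have "v \<in> {Suc (Suc b + ny)..Suc b + ny + ninl cs}" using Cset W by blast
      then show "g v = v" using g1 nyM by auto
    qed
  qed
  have mD1: "map g D1 = D1"
    by (rule map_id_on) (use D1set g1 in auto)
  have mD: "map (map g) Dw = Dw'"
  proof -
    have "map (map g) Dw = map (map (g \<circ> Suc)) Dw'" by (simp add: Dw_eq)
    also have "\<dots> = Dw'"
    proof (rule map_id_on)
      fix W assume W: "W \<in> set Dw'"
      show "map (g \<circ> Suc) W = W"
      proof (rule map_id_on)
        fix v assume "v \<in> set W"
        then have "v \<in> {Suc (Suc b)..Suc b + M}" using Dw'set W by blast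
        then show "(g \<circ> Suc) v = v" using g4 by auto
      qed
    qed
    finally show ?thesis .
  qed
  have "map g (P @ S) = join (Suc (Suc b) + M) Cw @ (Suc (Suc b) + M) # D1 @ Suc b # join (Suc b) Dw'"
    by (simp add: P_def S_def map_join g2 g3 mC mD1 mD)
  then show ?thesis using chain E1 E2 by (simp add: P_def S_def y_def)
qed



lemma nin_lrot: "lrot s t \<Longrightarrow> nin s = nin t"
  by (induction rule: lrot.induct) auto

lemma wf_lrot: "lrot s t \<Longrightarrow> wf_ptree s \<Longrightarrow> wf_ptree t"
  by (induction rule: lrot.induct) auto

lemma join_mid: "join k (As @ W # Bs) = (if As = [] then [] else join k As @ [k]) @ W @ (if Bs = [] then [] else k # join k Bs)"
proof (cases As)
  case Nil then show ?thesis by (cases Bs) auto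
next
  case (Cons A As')
  then show ?thesis by (cases Bs) auto
qed

lemma words_canl_sub: "(\<Union>W\<in>set (map word (canl b cs)). set W) \<subseteq> {Suc b..b + ninl cs}"
proof -
  have "(\<Union>W\<in>set (map word (canl b cs)). set W) \<subseteq> set (concat (map labels (canl b cs)))"
    using word_sub_labels by fastforce
  then show ?thesis using labels_canl[of b cs] by simp
qed

lemma covs_lrot: "lrot s t \<Longrightarrow> wf_ptree s \<Longrightarrow> covs (word (can b s)) (word (can b t))"
proof (induction arbitrary: b rule: lrot.induct)
  case (root cs ds d1)
  then show ?case using rot_root by blast
next
  case (sub s' t' xs ys)
  have wfs: "wf_ptree s'" using sub(3) by auto
  have IH: "covs (word (can (Suc b + ninl ys) s')) (word (can (Suc b + ninl ys) t'))"
    using sub(2)[OF wfs] .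
  have nn: "nin s' = nin t'" using nin_lrot[OF sub(1)] .
  define c where "c = Suc b + ninl ys"
  define As where "As = map word (canl (c + nin s') xs)"
  define Bs where "Bs = map word (canl (Suc b) ys)"
  define L where "L = (if As = [] then [] else join (Suc b) As @ [Suc b])"
  define R where "R = (if Bs = [] then [] else Suc b # join (Suc b) Bs)"
  have ws: "word (can b (Node (xs @ s' # ys))) = L @ word (can c s') @ R"
    by (simp add: canl_append word_join join_mid L_def R_def As_def Bs_def c_def algebra_simps)
  have wt: "word (can b (Node (xs @ t' # ys))) = L @ word (can c t') @ R"
    by (simp add: canl_append word_join join_mid L_def R_def As_def Bs_def c_def nn algebra_simps)
  have Lset: "set L \<subseteq> insert (Suc b) {Suc (c + nin s')..c + nin s' + ninl xs}"
    using set_join_sub[of "Suc b" As] words_canl_sub[of "c + nin s'" xs] by (auto simp: L_def As_def)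
  have Rset: "set R \<subseteq> insert (Suc b) {Suc (Suc b)..Suc b + ninl ys}"
    using set_join_sub[of "Suc b" Bs] words_canl_sub[of "Suc b" ys] by (auto simp: R_def Bs_def)
  have Wset: "set (word (can c s')) \<subseteq> {Suc c..c + nin s'}" by (rule word_can_range)
  have disj: "\<forall>v\<in>set (word (can c s')). v \<notin> set L \<and> v \<notin> set R"
  proof
    fix v assume "v \<in> set (word (can c s'))"
    then have v: "Suc c \<le> v" "v \<le> c + nin s'" using Wset by auto
    have "v \<notin> set L" using Lset v c_def by fastforce
    moreover have "v \<notin> set R" using Rset v c_def by fastforce
    ultimately show "v \<notin> set L \<and> v \<notin> set R" by simp
  qed
  show ?case unfolding ws wt using covs_ctx[OF IH[folded c_def] disj] .
qed

lemma packed_can: "wf_ptree t \<Longrightarrow> packed (word (can 0 t))"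
proof -
  assume wf: "wf_ptree t"
  have s: "set (word (can 0 t)) = {1..nin t}" using word_can_set[OF wf, of 0] by simp
  show ?thesis
  proof (cases "nin t = 0")
    case True then show ?thesis using s by (simp add: packed_def)
  next
    case False
    then have "Max (insert 0 {1..nin t}) = nin t" by (intro Max_eqI) auto
    then show ?thesis using s by (simp add: packed_def)
  qed
qed

lemma iota_mono: "pt_le s t \<Longrightarrow> wf_ptree s \<Longrightarrow> pw_le (word (can 0 s)) (word (can 0 t))"
proof -
  assume p: "pt_le s t" and wf: "wf_ptree s"
  have "covs (word (can 0 s)) (word (can 0 t)) \<and> wf_ptree t"
    using p unfolding pt_le_def
  proof (induction rule: rtranclp_induct)
    case base then show ?case using wf by simp
  next
    case (step y z)
    then show ?case using covs_lrot[OF step(2), of 0] wf_lrot[OF step(2)] by (auto intro: rtranclp_trans)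
  qed
  then show ?thesis using covs_pw packed_can[OF wf] by blast
qed



definition stirl :: "nat list \<Rightarrow> bool" where
  "stirl x \<longleftrightarrow> (\<forall>i j l. i < j \<and> j < l \<and> l < length x \<and> x ! i = x ! l \<longrightarrow> x ! i \<le> x ! j)"

lemma stirl_comp:
  assumes "stirl A" "stirl B" "set A \<inter> set B = {}" "\<forall>a\<in>set A. k < a" "\<forall>v\<in>set B. k \<le> v"
  shows "stirl (A @ k # B)"
  unfolding stirl_def
proof (intro allI impI, elim conjE)
  fix i j l assume ij: "i < j" "j < l" "l < length (A @ k # B)" and eq: "(A @ k # B) ! i = (A @ k # B) ! l"
  let ?x = "A @ k # B"
  let ?n = "length A"
  consider "l < ?n" | "?n < i" | "i < ?n" "?n < l" | "i = ?n" | "l = ?n" by linarith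
  then show "?x ! i \<le> ?x ! j"
  proof cases
    case 1
    then show ?thesis using assms(1) ij eq unfolding stirl_def by (auto simp: nth_append)
  next
    case 2
    have "B ! (i - Suc ?n) \<le> B ! (j - Suc ?n)"
      using assms(2) unfolding stirl_def
      by (rule allE[of _ "i - Suc ?n"], elim allE[of _ "j - Suc ?n"] allE[of _ "l - Suc ?n"])
         (use 2 ij eq in \<open>auto simp: nth_append nth_Cons'\<close>)
    then show ?thesis using 2 ij by (auto simp: nth_append nth_Cons')
  next
    case 3
    have "?x ! i \<in> set A" using 3 by (simp add: nth_append)
    moreover have "?x ! l \<in> set B" using 3 ij by (auto simp: nth_append nth_Cons')
    ultimately show ?thesis using eq assms(3) by auto
  next
    case 4
    then have "?x ! i = k" by (simp add: nth_append)
    moreover have "?x ! j \<in> set B" using 4 ij by (auto simp: nth_append nth_Cons')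
    ultimately show ?thesis using assms(5) by auto
  next
    case 5
    then have "?x ! l = k" by (simp add: nth_append)
    moreover have "?x ! i \<in> set A" using 5 ij by (simp add: nth_append)
    ultimately show ?thesis using eq assms(4) by auto
  qed
qed

lemma stirl_list:
  "(\<forall>c\<in>set cs. stirl (word c)) \<Longrightarrow> distinct (concat (map labels cs)) \<Longrightarrow>
   (\<forall>c\<in>set cs. \<forall>l\<in>set (labels c). k < l) \<Longrightarrow> stirl (join k (map word cs))"
proof (induction cs)
  case Nil then show ?case by (simp add: stirl_def)
next
  case (Cons c cs')
  show ?case
  proof (cases "cs' = []")
    case True then show ?thesis using Cons(2) by simp
  next
    case False
    have ne: "map word cs' \<noteq> []" using False by simp
    have jeq: "join k (map word (c # cs')) = word c @ k # join k (map word cs')"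
      using join_cons[OF ne] by simp
    have IH: "stirl (join k (map word cs'))" using Cons by simp
    have s1: "set (word c) \<subseteq> set (labels c)" by (rule word_sub_labels)
    have s2: "set (join k (map word cs')) \<subseteq> insert k (\<Union>c'\<in>set cs'. set (labels c'))"
      using set_join_sub[of k "map word cs'"] word_sub_labels by fastforce
    have d: "set (labels c) \<inter> (\<Union>c'\<in>set cs'. set (labels c')) = {}" using Cons(3) by simp
    have kc: "k \<notin> set (labels c)" using Cons(4) by auto
    show ?thesis unfolding jeq
    proof (rule stirl_comp)
      show "stirl (word c)" using Cons(2) by simp
      show "stirl (join k (map word cs'))" by (rule IH)
      show "set (word c) \<inter> set (join k (map word cs')) = {}" using s1 s2 d kc by blast
      show "\<forall>a\<in>set (word c). k < a" using s1 Cons(4) by auto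
      show "\<forall>v\<in>set (join k (map word cs')). k \<le> v" using s2 Cons(4) by (fastforce simp: less_imp_le)
    qed
  qed
qed

lemma stirl_word: "lbl_incr u \<Longrightarrow> distinct (labels u) \<Longrightarrow> stirl (word u)"
proof (induction u)
  case LLeaf then show ?case by (simp add: stirl_def)
next
  case (LNode k cs)
  have "stirl (join k (map word cs))"
  proof (rule stirl_list)
    show "\<forall>c\<in>set cs. stirl (word c)" using LNode
      by (auto simp: distinct_concat_iff)
    show "distinct (concat (map labels cs))" using LNode(3) by simp
    show "\<forall>c\<in>set cs. \<forall>l\<in>set (labels c). k < l" using lbl_child LNode(2) by blast
  qed
  then show ?case by (simp add: word_join)
qed

lemma pat_adjacent:
  assumes "packed x" "i < j" "j < l" "l < length x" "x ! j < x ! i" "x ! i < x ! l"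
  shows "\<exists>i j l. i < j \<and> j < l \<and> l < length x \<and> x ! j < x ! i \<and> x ! l = Suc (x ! i)"
  using assms(2-)
proof (induction "x ! l - x ! i" arbitrary: i j l rule: less_induct)
  case less
  show ?case
  proof (cases "x ! l = Suc (x ! i)")
    case True then show ?thesis using less by blast
  next
    case False
    define r where "r = Suc (x ! i)"
    have rl: "r < x ! l" using False less(6) by (simp add: r_def)
    have "x ! l \<in> set x" using less(4) by simp
    then have "x ! l \<le> Max (insert 0 (set x))" by simp
    moreover have "1 \<le> r" by (simp add: r_def)
    ultimately have "r \<in> set x" using assms(1) rl unfolding packed_def by auto
    then obtain p where p: "p < length x" "x ! p = r" by (auto simp: in_set_conv_nth)
    have pj: "p \<noteq> j" using p less(5) by (auto simp: r_def)
    show ?thesis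
    proof (cases "j < p")
      case True
      then show ?thesis using less(2) p less(5) by (intro exI[of _ i] exI[of _ j] exI[of _ p]) (auto simp: r_def)
    next
      case False
      then have pj2: "p < j" using pj by simp
      have "x ! l - x ! p < x ! l - x ! i" using p rl by (simp add: r_def)
      moreover have "x ! j < x ! p" using p less(5) by (simp add: r_def)
      moreover have "x ! p < x ! l" using p rl by simp
      ultimately show ?thesis using less(1)[of l p j] pj2 less(3) less(4) by blast
    qed
  qed
qed

lemma sep_exists:
  assumes "packed x" "stirl x" "\<not> avoids213 x"
  shows "\<exists>a P e S. x = P @ e # S \<and> e < a \<and> a \<in> set P \<and> a \<notin> set S \<and> Suc a \<in> set S \<and> Suc a \<notin> set P"
proof -
  obtain i j l where p: "i < j" "j < l" "l < length x" "x ! j < x ! i" "x ! i < x ! l"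
    using assms(3) unfolding avoids213_def by blast
  obtain i j l where q: "i < j" "j < l" "l < length x" "x ! j < x ! i" "x ! l = Suc (x ! i)"
    using pat_adjacent[OF assms(1) p] by blast
  define a where "a = x ! i"
  define P where "P = take j x"
  define S where "S = drop (Suc j) x"
  have x: "x = P @ x ! j # S" using q by (simp add: P_def S_def id_take_nth_drop)
  have aP: "a \<in> set P" using q by (auto simp: P_def a_def in_set_conv_nth intro!: exI[of _ i])
  have sS: "Suc a \<in> set S" using q
    by (auto simp: S_def a_def in_set_conv_nth intro!: exI[of _ "l - Suc j"])
  have nS: "a \<notin> set S"
  proof
    assume "a \<in> set S"
    then obtain p where p: "p < length S" "S ! p = a" by (auto simp: in_set_conv_nth)
    then have "x ! (Suc j + p) = a" "Suc j + p < length x" by (auto simp: S_def)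
    then have "x ! i \<le> x ! j" using assms(2) q(1) unfolding stirl_def a_def
      by (metis add_Suc less_add_Suc1 less_trans_Suc)
    then show False using q(4) by simp
  qed
  have nP: "Suc a \<notin> set P"
  proof
    assume "Suc a \<in> set P"
    then obtain p where p: "p < length P" "P ! p = Suc a" by (auto simp: in_set_conv_nth)
    then have "x ! p = Suc a" "p < j" by (auto simp: P_def)
    then have "x ! p \<le> x ! j" using assms(2) q(2) q(3) q(5) unfolding stirl_def a_def by metis
    then show False using q(4) \<open>x ! p = Suc a\<close> by (simp add: a_def)
  qed
  show ?thesis using x aP sS nS nP q(4) by (auto simp: a_def)
qed



lemma gsp_good: "gsp u \<Longrightarrow> good u"
  by (simp add: gsp_def good_def)

lemma gsp_packed: "gsp u \<Longrightarrow> packed (word u)"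
proof -
  assume g: "gsp u"
  have s: "set (word u) = {1..length (labels u)}"
    using g labels_word[of u] by (simp add: gsp_def)
  show ?thesis
  proof (cases "length (labels u) = 0")
    case True then show ?thesis using s by (simp add: packed_def)
  next
    case False
    then have "Max (insert 0 {1..length (labels u)}) = length (labels u)" using False by (intro Max_eqI) (auto simp: Suc_le_eq)
    then show ?thesis using s by (simp add: packed_def)
  qed
qed

lemma to_can: "gsp u \<Longrightarrow> pw_le (word u) (word (can 0 (strip u)))"
proof (induction "card (set (word u) \<times> set (word u)) - card (iInv (word u))" arbitrary: u rule: less_induct)
  case less
  define x where "x = word u"
  show ?case
  proof (cases "avoids213 x")
    case True
    have "u = can 0 (strip u)"
      by (rule uniq) (use less(2) True in \<open>auto simp: gsp_def good_def x_def\<close>)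
    then show ?thesis by (simp add: pw_le_def)
  next
    case False
    have px: "packed x" using gsp_packed[OF less(2)] by (simp add: x_def)
    have sx: "stirl x" using stirl_word less(2) by (simp add: gsp_def x_def)
    obtain a P e S where d: "x = P @ e # S" "e < a" "a \<in> set P" "a \<notin> set S" "Suc a \<in> set S" "Suc a \<notin> set P"
      using sep_exists[OF px sx False] by blast
    define y where "y = map (sw a) x"
    define u' where "u' = relabel (sw a) u"
    have gu: "good u" using gsp_good[OF less(2)] .
    have ldx: "ldec x = u" using ldec_word[OF gu] by (simp add: x_def)
    have ly: "ldec y = u'"
      using sep_swap[OF d(2) d(4) d(6)] d(1) ldx by (simp add: y_def u'_def)
    have wu': "word u' = y" by (simp add: u'_def y_def x_def word_relabel)
    have gu': "good u'" using good_ldec[of y] ly by (simp add: good_def)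
    have inP: "a \<in> set x" "Suc a \<in> set x" using d by auto
    have lu: "set (labels u) = set x" using labels_word[of u] gu by (simp add: good_def x_def)
    have gsp': "gsp u'"
    proof -
      have dl: "distinct (labels u)" and sl: "set (labels u) = {1..length (labels u)}"
        using less(2) by (auto simp: gsp_def)
      have "distinct (labels u')" using dl
        by (simp add: u'_def labels_relabel distinct_map inj_on_def sw_inj)
      moreover have "set (labels u') = set (labels u)"
      proof -
        have "set (labels u') = sw a ` set (labels u)" by (simp add: u'_def labels_relabel)
        also have "\<dots> = set (labels u)"
        proof
          show "sw a ` set (labels u) \<subseteq> set (labels u)" using inP lu by (auto simp: sw_def)
          show "set (labels u) \<subseteq> sw a ` set (labels u)"
          proof
            fix v assume v: "v \<in> set (labels u)"
            have "sw a v \<in> set (labels u)" using v inP lu by (auto simp: sw_def)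
            then show "v \<in> sw a ` set (labels u)" by (metis image_eqI sw_invol)
          qed
        qed
        finally show ?thesis .
      qed
      moreover have "length (labels u') = length (labels u)" by (simp add: u'_def labels_relabel)
      ultimately show ?thesis using gu' sl by (simp add: gsp_def good_def)
    qed
    have cv: "cov x y"
      unfolding cov_def using d
      by (intro exI[of _ a] exI[of _ "P @ [e]"] exI[of _ S]) (auto simp: y_def)
    have pw: "pw_cover x y \<and> card (iInv y) = card (iInv x) + 1" using cov_pw[OF cv px] .
    have sy: "set y = set x" using cov_set[OF cv] .
    have bound: "card (iInv y) \<le> card (set y \<times> set y)"
      by (rule card_mono) (auto simp: iInv_sub)
    have lt: "card (set (word u') \<times> set (word u')) - card (iInv (word u')) <
              card (set (word u) \<times> set (word u)) - card (iInv (word u))"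
      using pw bound sy wu' by (simp add: x_def)
    have IH: "pw_le (word u') (word (can 0 (strip u')))" by (rule less(1)[OF lt gsp'])
    have st: "strip u' = strip u" by (simp add: u'_def)
    have "pw_le x y" using pw unfolding pw_le_def by (simp add: r_into_rtranclp)
    then show ?thesis using IH st wu' by (simp add: pw_le_def x_def)
  qed
qed

theorem mainTheorem9:
  fixes n :: nat and u :: ltree and t :: ptree
  assumes "gsp u" and "pdeg (\<pi> u) = n"
    and "wf_ptree t" and "pdeg t = n"
  shows "pt_le (\<pi> u) t \<longleftrightarrow> gsp_le u (\<iota> t)"
proof -
  have it: "\<iota> t = can 0 t" using iota_eq[OF assms(3)] .
  have gu: "good u" using gsp_good[OF assms(1)] .
  have wfu: "wf_ptree (strip u)" using assms(1) by (simp add: gsp_def)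
  show ?thesis
  proof
    assume "pt_le (\<pi> u) t"
    then have "pw_le (word (can 0 (strip u))) (word (can 0 t))" using iota_mono wfu by blast
    moreover have "pw_le (word u) (word (can 0 (strip u)))" using to_can[OF assms(1)] .
    ultimately show "gsp_le u (\<iota> t)" unfolding gsp_le_def it pw_le_def by simp
  next
    assume "gsp_le u (\<iota> t)"
    then have "pw_le (word u) (word (can 0 t))" by (simp add: gsp_le_def it)
    then have "pt_le (dec (word u)) (dec (word (can 0 t)))" by (rule pw_pt)
    moreover have "dec (word u) = strip u" using ldec_word[OF gu] by (simp add: dec_def)
    moreover have "good (can 0 t)" using incr_can[of 0 t] assms(3) by (simp add: good_def strip_can)
    then have "dec (word (can 0 t)) = t" using ldec_word by (simp add: dec_def strip_can)
    ultimately show "pt_le (\<pi> u) t" by simp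
  qed
qed


end
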